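(* Let $M$ be a Poisson manifold with a local star product $*$ and let $\omega:C^\infty_0(M)[[\lambda]]\to\mathbb C[[\lambda]]$ be a positive $\mathbb C[[\lambda]]$-linear functional with GNS representation $\pi_\omega$ of $C^\infty(M)[[\lambda]]$. Then $\pi_\omega$ is faithful (i.e. injective) if and only if $\omega$ is faithful.
   Context: $C^\infty(M)$ denotes complex-valued smooth functions and $\lambda$ is a formal parameter. A (local) star product $*$ on $M$ is an associative $\mathbb C[[\lambda]]$-bilinear product on $C^\infty(M)[[\lambda]]$ with $f*g=\sum_{r\ge0}\lambda^rM_r(f,g)$ for $f,g\in C^\infty(M)$, where the $M_r$ are local operators, $M_0(f,g)=fg$, $M_1(f,g)-M_1(g,f)=\mathrm i\{f,g\}$, $M_r$ vanishes on constants for $r\ge1$, and $\overline{f*g}=\bar g*\bar f$ ($\bar\lambda=\lambda$). $C^\infty_0(M)[[\lambda]]$ is the set of formal series whose coefficients have compact support. $\mathbb R[[\lambda]]$ is ordered by: $a>0$ iff its lowest-order nonzero coefficient is positive; $\omega$ is positive if $\omega(\bar f*f)\ge0$ for all $f$, and faithful if $\mathcal J_\omega=\{f\in C^\infty_0(M)[[\lambda]]:\omega(\bar f*f)=0\}=\{0\}$. The GNS representation is $\pi_\omega:C^\infty(M)[[\lambda]]\to\operatorname{End}(\mathfrak H_\omega)$, $\pi_\omega(f)\psi_g=\psi_{f*g}$, on $\mathfrak H_\omega=C^\infty_0(M)[[\lambda]]/\mathcal J_\omega$ with classes $\psi_g$. *)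

theory Defs
  imports "HOL-Analysis.Analysis" "HOL-Computational_Algebra.Formal_Power_Series"
begin

text \<open>Coinductive = every order of differentiability.\<close>
coinductive smooth_on :: "'e::euclidean_space set \<Rightarrow> ('e \<Rightarrow> 'b::real_normed_vector) \<Rightarrow> bool"
  for U where
  smooth_onI: "\<lbrakk> \<forall>x\<in>U. f differentiable (at x);
     \<forall>b\<in>Basis. smooth_on U (\<lambda>x. frechet_derivative f (at x) b) \<rbrakk> \<Longrightarrow> smooth_on U f"

definition smooth_atlas :: "('m::topological_space set \<times> ('m \<Rightarrow> 'e::euclidean_space)) set \<Rightarrow> bool" where
  "smooth_atlas A \<longleftrightarrow>
     \<Union>(fst ` A) = UNIV \<and>
     (\<forall>(U,\<phi>)\<in>A. open U \<and> open (\<phi> ` U) \<and> homeomorphism U (\<phi> ` U) \<phi> (inv_into U \<phi>)) \<and>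
     (\<forall>(U,\<phi>)\<in>A. \<forall>(V,\<psi>)\<in>A. smooth_on (\<phi> ` (U \<inter> V)) (\<psi> \<circ> inv_into U \<phi>))"

definition smooth_fun :: "('m::topological_space set \<times> ('m \<Rightarrow> 'e::euclidean_space)) set \<Rightarrow> ('m \<Rightarrow> complex) \<Rightarrow> bool" where
  "smooth_fun A f \<longleftrightarrow> (\<forall>(U,\<phi>)\<in>A. smooth_on (\<phi> ` U) (f \<circ> inv_into U \<phi>))"

definition supp :: "('m::topological_space \<Rightarrow> complex) \<Rightarrow> 'm set" where
  "supp f = closure {x. f x \<noteq> 0}"

definition poisson_bracket ::
  "('m::topological_space set \<times> ('m \<Rightarrow> 'e::euclidean_space)) set \<Rightarrow>
   (('m \<Rightarrow> complex) \<Rightarrow> ('m \<Rightarrow> complex) \<Rightarrow> ('m \<Rightarrow> complex)) \<Rightarrow> bool" where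
  "poisson_bracket A pb \<longleftrightarrow>
    (\<forall>f g h (a::complex). smooth_fun A f \<longrightarrow> smooth_fun A g \<longrightarrow> smooth_fun A h \<longrightarrow>
       smooth_fun A (pb f g) \<and>
       pb (\<lambda>x. a * f x + g x) h = (\<lambda>x. a * pb f h x + pb g h x) \<and>
       pb f g = (\<lambda>x. - pb g f x) \<and>
       pb f (\<lambda>x. g x * h x) = (\<lambda>x. pb f g x * h x + g x * pb f h x) \<and>
       (\<lambda>x. pb f (pb g h) x + pb g (pb h f) x + pb h (pb f g) x) = (\<lambda>x. 0) \<and>
       (\<lambda>x. cnj (pb f g x)) = pb (\<lambda>x. cnj (f x)) (\<lambda>x. cnj (g x)))"

text \<open>An element of C-infinity(M)[[lambda]] is represented by its sequence of coefficients.\<close>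
type_synonym 'm fseries = "nat \<Rightarrow> 'm \<Rightarrow> complex"

definition smooth_series :: "('m::topological_space set \<times> ('m \<Rightarrow> 'e::euclidean_space)) set \<Rightarrow> 'm fseries set" where
  "smooth_series A = {F. \<forall>n. smooth_fun A (F n)}"

definition compact_series :: "('m::topological_space set \<times> ('m \<Rightarrow> 'e::euclidean_space)) set \<Rightarrow> 'm fseries set" where
  "compact_series A = {F. \<forall>n. smooth_fun A (F n) \<and> compact (supp (F n))}"

text \<open>The C[[lambda]]-bilinear extension of f * g = sum_r lambda^r M_r(f,g).\<close>
definition star :: "(nat \<Rightarrow> ('m \<Rightarrow> complex) \<Rightarrow> ('m \<Rightarrow> complex) \<Rightarrow> ('m \<Rightarrow> complex)) \<Rightarrow>
                    'm fseries \<Rightarrow> 'm fseries \<Rightarrow> 'm fseries" where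
  "star Mr F G = (\<lambda>n x. \<Sum>r\<le>n. \<Sum>s\<le>n - r. Mr r (F s) (G (n - r - s)) x)"

definition series_cnj :: "'m fseries \<Rightarrow> 'm fseries" where
  "series_cnj F = (\<lambda>n x. cnj (F n x))"

definition series_add :: "'m fseries \<Rightarrow> 'm fseries \<Rightarrow> 'm fseries" where
  "series_add F G = (\<lambda>n x. F n x + G n x)"

definition series_diff :: "'m fseries \<Rightarrow> 'm fseries \<Rightarrow> 'm fseries" where
  "series_diff F G = (\<lambda>n x. F n x - G n x)"

definition series_scale :: "complex fps \<Rightarrow> 'm fseries \<Rightarrow> 'm fseries" where
  "series_scale a F = (\<lambda>n x. \<Sum>k\<le>n. fps_nth a k * F (n - k) x)"

definition local_star_product ::
  "('m::topological_space set \<times> ('m \<Rightarrow> 'e::euclidean_space)) set \<Rightarrow>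
   (('m \<Rightarrow> complex) \<Rightarrow> ('m \<Rightarrow> complex) \<Rightarrow> ('m \<Rightarrow> complex)) \<Rightarrow>
   (nat \<Rightarrow> ('m \<Rightarrow> complex) \<Rightarrow> ('m \<Rightarrow> complex) \<Rightarrow> ('m \<Rightarrow> complex)) \<Rightarrow> bool" where
  "local_star_product A pb Mr \<longleftrightarrow>
    \<comment> \<open>each M_r is a C-bilinear operator on smooth functions\<close>
    (\<forall>r f g h (a::complex). smooth_fun A f \<longrightarrow> smooth_fun A g \<longrightarrow> smooth_fun A h \<longrightarrow>
       smooth_fun A (Mr r f g) \<and>
       Mr r (\<lambda>x. a * f x + g x) h = (\<lambda>x. a * Mr r f h x + Mr r g h x) \<and>
       Mr r h (\<lambda>x. a * f x + g x) = (\<lambda>x. a * Mr r h f x + Mr r h g x)) \<and>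
    \<comment> \<open>locality: M_r does not increase supports\<close>
    (\<forall>r f g. smooth_fun A f \<longrightarrow> smooth_fun A g \<longrightarrow>
       supp (Mr r f g) \<subseteq> supp f \<inter> supp g) \<and>
    \<comment> \<open>M_0 is the pointwise product\<close>
    (\<forall>f g. smooth_fun A f \<longrightarrow> smooth_fun A g \<longrightarrow> Mr 0 f g = (\<lambda>x. f x * g x)) \<and>
    \<comment> \<open>M_1(f,g) - M_1(g,f) = i {f,g}\<close>
    (\<forall>f g. smooth_fun A f \<longrightarrow> smooth_fun A g \<longrightarrow>
       (\<lambda>x. Mr 1 f g x - Mr 1 g f x) = (\<lambda>x. \<i> * pb f g x)) \<and>
    \<comment> \<open>M_r vanishes on constants for r >= 1\<close>
    (\<forall>r f (c::complex). r \<ge> 1 \<longrightarrow> smooth_fun A f \<longrightarrow>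
       Mr r (\<lambda>x. c) f = (\<lambda>x. 0) \<and> Mr r f (\<lambda>x. c) = (\<lambda>x. 0)) \<and>
    \<comment> \<open>Hermiticity: conj (f * g) = conj g * conj f\<close>
    (\<forall>r f g. smooth_fun A f \<longrightarrow> smooth_fun A g \<longrightarrow>
       (\<lambda>x. cnj (Mr r f g x)) = Mr r (\<lambda>x. cnj (g x)) (\<lambda>x. cnj (f x))) \<and>
    \<comment> \<open>associativity on C-infinity(M)[[lambda]]\<close>
    (\<forall>F G H. F \<in> smooth_series A \<longrightarrow> G \<in> smooth_series A \<longrightarrow> H \<in> smooth_series A \<longrightarrow>
       star Mr (star Mr F G) H = star Mr F (star Mr G H))"

text \<open>Order on R[[lambda]] (viewed inside C[[lambda]]): a \<ge> 0 iff a has real coefficients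
  and either a = 0 or its lowest-order nonzero coefficient is positive.\<close>
definition fps_nonneg :: "complex fps \<Rightarrow> bool" where
  "fps_nonneg a \<longleftrightarrow> (\<forall>n. Im (fps_nth a n) = 0) \<and> (a = 0 \<or> Re (fps_nth a (subdegree a)) > 0)"

definition positive_functional ::
  "('m::topological_space set \<times> ('m \<Rightarrow> 'e::euclidean_space)) set \<Rightarrow>
   (nat \<Rightarrow> ('m \<Rightarrow> complex) \<Rightarrow> ('m \<Rightarrow> complex) \<Rightarrow> ('m \<Rightarrow> complex)) \<Rightarrow>
   ('m fseries \<Rightarrow> complex fps) \<Rightarrow> bool" where
  "positive_functional A Mr \<omega> \<longleftrightarrow>
    (\<forall>F\<in>compact_series A. \<forall>G\<in>compact_series A. \<forall>a.
       \<omega> (series_add (series_scale a F) G) = a * \<omega> F + \<omega> G) \<and>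
    (\<forall>F\<in>compact_series A. fps_nonneg (\<omega> (star Mr (series_cnj F) F)))"

definition gns_ideal ::
  "('m::topological_space set \<times> ('m \<Rightarrow> 'e::euclidean_space)) set \<Rightarrow>
   (nat \<Rightarrow> ('m \<Rightarrow> complex) \<Rightarrow> ('m \<Rightarrow> complex) \<Rightarrow> ('m \<Rightarrow> complex)) \<Rightarrow>
   ('m fseries \<Rightarrow> complex fps) \<Rightarrow> 'm fseries set" where
  "gns_ideal A Mr \<omega> = {F \<in> compact_series A. \<omega> (star Mr (series_cnj F) F) = 0}"

definition faithful_functional where
  "faithful_functional A Mr \<omega> \<longleftrightarrow> gns_ideal A Mr \<omega> = {(\<lambda>n x. 0)}"

text \<open>The class psi_G of G in the quotient C_0(M)[[lambda]] / J_omega.\<close>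
definition gns_vec where
  "gns_vec A Mr \<omega> G = {H \<in> compact_series A. series_diff H G \<in> gns_ideal A Mr \<omega>}"

definition gns_space where
  "gns_space A Mr \<omega> = gns_vec A Mr \<omega> ` compact_series A"

text \<open>pi_omega(F) psi_G = psi_(F*G), as a map on the quotient (undefined-free: empty outside).\<close>
definition gns_rep where
  "gns_rep A Mr \<omega> F = (\<lambda>\<psi>. if \<psi> \<in> gns_space A Mr \<omega>
      then gns_vec A Mr \<omega> (star Mr F (SOME G. G \<in> compact_series A \<and> \<psi> = gns_vec A Mr \<omega> G))
      else {})"

end

theory Submission
  imports Defs "HOL-Computational_Algebra.Polynomial"
begin


definition pd :: "('e::euclidean_space \<Rightarrow> 'b::real_normed_vector) \<Rightarrow> 'e \<Rightarrow> 'e \<Rightarrow> 'b" where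
  "pd f b x = frechet_derivative f (at x) b"

lemma pd_eq: "pd f b = (\<lambda>x. frechet_derivative f (at x) b)"
  by (rule ext) (simp add: pd_def)

fun ck :: "'e::euclidean_space set \<Rightarrow> nat \<Rightarrow> ('e \<Rightarrow> 'b::real_normed_vector) \<Rightarrow> bool" where
  "ck U 0 f = True"
| "ck U (Suc k) f = ((\<forall>x\<in>U. f differentiable (at x)) \<and> (\<forall>b\<in>Basis. ck U k (pd f b)))"

definition sm :: "'e::euclidean_space set \<Rightarrow> ('e \<Rightarrow> 'b::real_normed_vector) \<Rightarrow> bool" where
  "sm U f \<longleftrightarrow> (\<forall>k. ck U k f)"

lemma smooth_on_sm: "smooth_on U f \<longleftrightarrow> sm U f"
proof
  assume "smooth_on U f"
  then have "ck U k f" for k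
  proof (induction k arbitrary: f)
    case 0 then show ?case by simp
  next
    case (Suc k)
    from Suc.prems have d: "\<forall>x\<in>U. f differentiable (at x)"
      and s: "\<forall>b\<in>Basis. smooth_on U (\<lambda>x. frechet_derivative f (at x) b)"
      by (auto elim: smooth_on.cases)
    have "\<forall>b\<in>Basis. ck U k (pd f b)" using s Suc.IH by (simp add: pd_eq)
    then show ?case using d by simp
  qed
  then show "sm U f" by (simp add: sm_def)
next
  assume "sm U f" then show "smooth_on U f"
  proof (coinduction arbitrary: f rule: smooth_on.coinduct)
    case (smooth_on f)
    have h: "ck U (Suc k) f" for k using smooth_on unfolding sm_def by (rule spec)
    have d: "\<forall>x\<in>U. f differentiable at x" using h[of 0] by simp
    have "\<forall>b\<in>Basis. \<forall>k. ck U k (\<lambda>x. frechet_derivative f (at x) b)" using h by (simp add: pd_eq)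
    then show ?case using d by (auto simp: sm_def)
  qed
qed

lemma ck_Suc_mono: "ck U (Suc k) f \<Longrightarrow> ck U k f"
  by (induction k arbitrary: f) auto

lemma ck_le_aux: "ck U (k + d) f \<Longrightarrow> ck U k f"
proof (induction d)
  case (Suc d)
  then have "ck U (Suc (k + d)) f" by simp
  then show ?case by (rule Suc.IH[OF ck_Suc_mono])
qed simp

lemma ck_le: "k \<le> m \<Longrightarrow> ck U m f \<Longrightarrow> ck U k f"
  using ck_le_aux[of U k "m - k" f] by simp

lemma ck_subset: "W \<subseteq> U \<Longrightarrow> ck U k f \<Longrightarrow> ck W k f"
  by (induction k arbitrary: f) auto

lemma ck_cong:
  assumes "open U" "ck U k f" "\<And>x. x \<in> U \<Longrightarrow> f x = g x"
  shows "ck U k g"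
  using assms(3,2)
proof (induction k arbitrary: f g)
  case 0 then show ?case by simp
next
  case (Suc k)
  have d: "f differentiable (at x)" if "x \<in> U" for x using Suc.prems that by auto
  have "g differentiable (at x)" if "x \<in> U" for x
    using d[OF that] assms(1) that Suc.prems(1)
    by (meson differentiable_def has_derivative_transform_within_open)
  moreover have "ck U k (pd g b)" if "b \<in> Basis" for b
  proof (rule Suc.IH)
    show "ck U k (pd f b)" using Suc.prems that by auto
  next
    show "pd f b x = pd g b x" if "x \<in> U" for x
      unfolding pd_def
      using frechet_derivative_transform_within_open[OF d[OF that] assms(1) that] Suc.prems(1) by metis
  qed
  ultimately show ?case by simp
qed

lemma pd_at: "(f has_derivative f') (at x) \<Longrightarrow> pd f b x = f' b"
  by (simp add: pd_def frechet_derivative_at[symmetric])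

lemma ck_diff: "ck U (Suc k) f \<Longrightarrow> x \<in> U \<Longrightarrow> (f has_derivative (\<lambda>b. pd f b x)) (at x)"
  by (auto simp: pd_def frechet_derivative_works)

lemma ck_const: "ck (U::'e::euclidean_space set) k (\<lambda>x. c)"
proof (induction k arbitrary: c)
  case (Suc k)
  have "pd (\<lambda>x::'e. c) b = (\<lambda>x. 0)" for b by (simp add: pd_eq)
  then show ?case using Suc by simp
qed simp

lemma ck_linear:
  fixes f :: "'e::euclidean_space \<Rightarrow> 'a::real_normed_vector"
  assumes "open U" "bounded_linear L"
  shows "ck U k f \<Longrightarrow> ck U k (\<lambda>x. L (f x))"
proof (induction k arbitrary: f)
  case (Suc k)
  have D: "((\<lambda>x. L (f x)) has_derivative (\<lambda>b. L (pd f b x))) (at x)" if "x \<in> U" for x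
    using bounded_linear.has_derivative[OF assms(2) ck_diff[OF Suc.prems that]] .
  show ?case
  proof (simp, intro conjI ballI)
    show "(\<lambda>x. L (f x)) differentiable at x" if "x \<in> U" for x
      using D[OF that] by (auto simp: differentiable_def)
    fix b :: 'e assume b: "b \<in> Basis"
    have "ck U k (\<lambda>x. L (pd f b x))" using Suc b by auto
    then show "ck U k (pd (\<lambda>x. L (f x)) b)"
      by (rule ck_cong[OF assms(1)]) (simp add: pd_at[OF D])
  qed
qed simp

lemma ck_add:
  fixes f :: "'e::euclidean_space \<Rightarrow> 'a::real_normed_vector"
  assumes "open U"
  shows "ck U k f \<Longrightarrow> ck U k g \<Longrightarrow> ck U k (\<lambda>x. f x + g x)"
proof (induction k arbitrary: f g)
  case (Suc k)
  have D: "((\<lambda>x. f x + g x) has_derivative (\<lambda>b. pd f b x + pd g b x)) (at x)" if "x \<in> U" for x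
    using has_derivative_add[OF ck_diff[OF Suc.prems(1) that] ck_diff[OF Suc.prems(2) that]] .
  show ?case
  proof (simp, intro conjI ballI)
    show "(\<lambda>x. f x + g x) differentiable at x" if "x \<in> U" for x
      using D[OF that] by (auto simp: differentiable_def)
    fix b :: 'e assume b: "b \<in> Basis"
    have "ck U k (\<lambda>x. pd f b x + pd g b x)" using Suc b by auto
    then show "ck U k (pd (\<lambda>x. f x + g x) b)"
      by (rule ck_cong[OF assms(1)]) (simp add: pd_at[OF D])
  qed
qed simp

lemma ck_bilinear:
  fixes f :: "'e::euclidean_space \<Rightarrow> 'a::real_normed_vector" and g :: "'e \<Rightarrow> 'b::real_normed_vector"
    and prod :: "'a \<Rightarrow> 'b \<Rightarrow> 'c::real_normed_vector"
  assumes "open U" "bounded_bilinear prod"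
  shows "ck U k f \<Longrightarrow> ck U k g \<Longrightarrow> ck U k (\<lambda>x. prod (f x) (g x))"
proof (induction k arbitrary: f g)
  case (Suc k)
  have D: "((\<lambda>x. prod (f x) (g x)) has_derivative (\<lambda>b. prod (f x) (pd g b x) + prod (pd f b x) (g x))) (at x)"
    if "x \<in> U" for x
    using bounded_bilinear.FDERIV[OF assms(2) ck_diff[OF Suc.prems(1) that] ck_diff[OF Suc.prems(2) that]] .
  show ?case
  proof (simp, intro conjI ballI)
    show "(\<lambda>x. prod (f x) (g x)) differentiable at x" if "x \<in> U" for x
      using D[OF that] by (auto simp: differentiable_def)
    fix b :: 'e assume b: "b \<in> Basis"
    have f1: "ck U k f" using Suc.prems(1) by (rule ck_Suc_mono)
    have g1: "ck U k g" using Suc.prems(2) by (rule ck_Suc_mono)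
    have "ck U k (\<lambda>x. prod (f x) (pd g b x))" using Suc.prems b by (intro Suc.IH f1) auto
    moreover have "ck U k (\<lambda>x. prod (pd f b x) (g x))" using Suc.prems b by (intro Suc.IH g1) auto
    ultimately have "ck U k (\<lambda>x. prod (f x) (pd g b x) + prod (pd f b x) (g x))"
      by (rule ck_add[OF assms(1)])
    then show "ck U k (pd (\<lambda>x. prod (f x) (g x)) b)"
      by (rule ck_cong[OF assms(1)]) (simp add: pd_at[OF D])
  qed
qed simp

lemma ck_sum:
  assumes "open U" "finite S" "\<And>i. i \<in> S \<Longrightarrow> ck U k (f i)"
  shows "ck U k (\<lambda>x. \<Sum>i\<in>S. f i x)"
  using assms(2,3)
proof (induction S rule: finite_induct)
  case empty then show ?case by (simp add: ck_const)
next
  case (insert a S)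
  then show ?case by (simp add: ck_add[OF assms(1)])
qed


lemma linear_expand:
  fixes f :: "'a::euclidean_space \<Rightarrow> 'b::real_normed_vector"
  assumes "linear f"
  shows "f x = (\<Sum>i\<in>Basis. (x \<bullet> i) *\<^sub>R f i)"
proof -
  have "f x = f (\<Sum>i\<in>Basis. (x \<bullet> i) *\<^sub>R i)" by (simp add: euclidean_representation)
  also have "\<dots> = (\<Sum>i\<in>Basis. (x \<bullet> i) *\<^sub>R f i)"
    using assms by (simp add: linear_sum linear_scale)
  finally show ?thesis .
qed

lemma sm_ck: "sm U f \<Longrightarrow> ck U k f" by (simp add: sm_def)

lemma sm_pd: assumes "sm U g" "b \<in> Basis" shows "sm U (pd g b)"
  unfolding sm_def
proof
  fix k
  have "ck U (Suc k) g" using assms(1) unfolding sm_def by blast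
  then show "ck U k (pd g b)" using assms(2) by simp
qed

lemma sm_diffble: assumes "sm U g" "x \<in> U" shows "g differentiable (at x)"
proof -
  have "ck U (Suc 0) g" using assms(1) unfolding sm_def by blast
  then show ?thesis using assms(2) by simp
qed

lemma sm_has_derivative: "sm U g \<Longrightarrow> x \<in> U \<Longrightarrow> (g has_derivative (\<lambda>b. pd g b x)) (at x)"
  unfolding sm_def using ck_diff by blast

lemma ck_compose:
  fixes g :: "'f::euclidean_space \<Rightarrow> 'b::real_normed_vector" and T :: "'e::euclidean_space \<Rightarrow> 'f"
  assumes "open W" "open S" "T ` W \<subseteq> S"
  shows "sm S g \<Longrightarrow> ck W k T \<Longrightarrow> ck W k (\<lambda>x. g (T x))"
proof (induction k arbitrary: g)
  case (Suc k)
  have TS: "T x \<in> S" if "x \<in> W" for x using assms(3) that by auto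
  have D: "((\<lambda>x. g (T x)) has_derivative (\<lambda>b. pd g (pd T b x) (T x))) (at x)" if "x \<in> W" for x
    using has_derivative_compose[OF ck_diff[OF Suc.prems(2) that] sm_has_derivative[OF Suc.prems(1) TS[OF that]]] .
  have lin: "linear (\<lambda>v. pd g v y)" if "y \<in> S" for y
    using has_derivative_linear[OF sm_has_derivative[OF Suc.prems(1) that]] .
  show ?case
  proof (simp only: ck.simps, intro conjI ballI)
    show "(\<lambda>x. g (T x)) differentiable at x" if "x \<in> W" for x
      using D[OF that] by (auto simp: differentiable_def)
    fix b :: 'e assume b: "b \<in> Basis"
    have T1: "ck W k T" using Suc.prems(2) by (rule ck_Suc_mono)
    have "ck W k (\<lambda>x. \<Sum>i\<in>Basis. (pd T b x \<bullet> i) *\<^sub>R pd g i (T x))"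
    proof (rule ck_sum[OF assms(1)], simp, rule ck_bilinear[OF assms(1) bounded_bilinear_scaleR])
      fix i :: 'f assume i: "i \<in> Basis"
      have "ck W k (pd T b)" using Suc.prems(2) b by simp
      then show "ck W k (\<lambda>x. pd T b x \<bullet> i)"
        by (rule ck_linear[OF assms(1) bounded_linear_inner_left])
      show "ck W k (\<lambda>x. pd g i (T x))"
        by (rule Suc.IH[OF sm_pd[OF Suc.prems(1) i] T1])
    qed
    then show "ck W k (pd (\<lambda>x. g (T x)) b)"
    proof (rule ck_cong[OF assms(1)])
      fix x assume x: "x \<in> W"
      show "(\<Sum>i\<in>Basis. (pd T b x \<bullet> i) *\<^sub>R pd g i (T x)) = pd (\<lambda>x. g (T x)) b x"
      proof -
        have e2: "pd g (pd T b x) (T x) = (\<Sum>i\<in>Basis. (pd T b x \<bullet> i) *\<^sub>R pd g i (T x))"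
          using linear_expand[OF lin[OF TS[OF x]], of "pd T b x"] by simp
        show ?thesis using pd_at[OF D[OF x], of b] e2 by simp
      qed
    qed
  qed
qed simp

lemma sm_compose:
  fixes g :: "'f::euclidean_space \<Rightarrow> 'b::real_normed_vector" and T :: "'e::euclidean_space \<Rightarrow> 'f"
  assumes "open W" "open S" "T ` W \<subseteq> S" "sm S g" "sm W T"
  shows "sm W (\<lambda>x. g (T x))"
  using ck_compose[OF assms(1-4)] assms(5) by (simp add: sm_def)

lemma ck_local:
  assumes "open S"
    and loc: "\<And>z. z \<in> S \<Longrightarrow> \<exists>W g. open W \<and> z \<in> W \<and> W \<subseteq> S \<and> sm W g \<and> (\<forall>x\<in>W. f x = g x)"
  shows "ck S k f"
  using loc
proof (induction k arbitrary: f)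
  case (Suc k)
  show ?case
  proof (simp only: ck.simps, intro conjI ballI)
    fix z assume z: "z \<in> S"
    obtain W g where W: "open W" "z \<in> W" "W \<subseteq> S" "sm W g" "\<forall>x\<in>W. f x = g x"
      using Suc.prems[OF z] by blast
    obtain D where "(g has_derivative D) (at z)" using sm_diffble[OF W(4,2)] by (auto simp: differentiable_def)
    then have "(f has_derivative D) (at z)"
      by (rule has_derivative_transform_within_open[OF _ W(1) W(2)]) (use W(5) in auto)
    then show "f differentiable at z" by (auto simp: differentiable_def)
  next
    fix b :: 'a assume b: "b \<in> Basis"
    show "ck S k (pd f b)"
    proof (rule Suc.IH)
      fix z assume z: "z \<in> S"
      obtain W g where W: "open W" "z \<in> W" "W \<subseteq> S" "sm W g" "\<forall>x\<in>W. f x = g x"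
        using Suc.prems[OF z] by blast
      have "pd f b x = pd g b x" if "x \<in> W" for x
        unfolding pd_def
        using frechet_derivative_transform_within_open[OF sm_diffble[OF W(4) that] W(1) that, of f] W(5)
        by simp
      then show "\<exists>W g. open W \<and> z \<in> W \<and> W \<subseteq> S \<and> sm W g \<and> (\<forall>x\<in>W. pd f b x = g x)"
        using W sm_pd[OF W(4) b] by blast
    qed
  qed
qed simp

lemma sm_local:
  assumes "open S"
    and "\<And>z. z \<in> S \<Longrightarrow> \<exists>W g. open W \<and> z \<in> W \<and> W \<subseteq> S \<and> sm W g \<and> (\<forall>x\<in>W. f x = g x)"
  shows "sm S f"
  using ck_local[OF assms] by (simp add: sm_def)

lemma sm_cong: "open U \<Longrightarrow> sm U f \<Longrightarrow> (\<And>x. x \<in> U \<Longrightarrow> f x = g x) \<Longrightarrow> sm U g"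
  unfolding sm_def using ck_cong by blast

lemma sm_subset: "W \<subseteq> U \<Longrightarrow> sm U f \<Longrightarrow> sm W f"
  unfolding sm_def using ck_subset by blast

lemma sm_const: "sm U (\<lambda>x. c)" by (simp add: sm_def ck_const)

lemma sm_linear: "open U \<Longrightarrow> bounded_linear L \<Longrightarrow> sm U f \<Longrightarrow> sm U (\<lambda>x. L (f x))"
  unfolding sm_def using ck_linear by blast

lemma sm_add: "open U \<Longrightarrow> sm U f \<Longrightarrow> sm U g \<Longrightarrow> sm U (\<lambda>x. f x + g x)"
  unfolding sm_def using ck_add by blast

lemma sm_bilinear:
  fixes f :: "'e::euclidean_space \<Rightarrow> 'a::real_normed_vector" and g :: "'e \<Rightarrow> 'b::real_normed_vector"
    and prod :: "'a \<Rightarrow> 'b \<Rightarrow> 'c::real_normed_vector"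
  shows "open U \<Longrightarrow> bounded_bilinear prod \<Longrightarrow> sm U f \<Longrightarrow> sm U g \<Longrightarrow> sm U (\<lambda>x. prod (f x) (g x))"
  unfolding sm_def using ck_bilinear by blast

lemma sm_sum: "open U \<Longrightarrow> finite S \<Longrightarrow> (\<And>i. i \<in> S \<Longrightarrow> sm U (f i)) \<Longrightarrow> sm U (\<lambda>x. \<Sum>i\<in>S. f i x)"
  unfolding sm_def using ck_sum by blast

lemma sm_mult: "open U \<Longrightarrow> sm U f \<Longrightarrow> sm U g \<Longrightarrow> sm U (\<lambda>x. f x * g x :: 'a::real_normed_algebra)"
  by (rule sm_bilinear[OF _ bounded_bilinear_mult])

lemma sm_scaleR: "open U \<Longrightarrow> sm U f \<Longrightarrow> sm U g \<Longrightarrow> sm U (\<lambda>x. f x *\<^sub>R g x)"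
  by (rule sm_bilinear[OF _ bounded_bilinear_scaleR])

lemma sm_minus: "open U \<Longrightarrow> sm U f \<Longrightarrow> sm U (\<lambda>x. - f x)"
  using sm_linear[OF _ bounded_linear_minus[OF bounded_linear_ident]] by blast

lemma sm_diff: "open U \<Longrightarrow> sm U f \<Longrightarrow> sm U g \<Longrightarrow> sm U (\<lambda>x. f x - g x)"
  using sm_add[of U f "\<lambda>x. - g x"] sm_minus[of U g] by simp

lemma ck_id: "ck (U::'e::euclidean_space set) k (\<lambda>x. x)"
proof (cases k)
  case (Suc m)
  have "pd (\<lambda>x::'e. x) b = (\<lambda>x. b)" for b by (simp add: pd_eq)
  then show ?thesis using Suc by (simp add: ck_const)
qed simp

lemma sm_id: "sm U (\<lambda>x. x)" by (simp add: sm_def ck_id)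

lemma ck_inverse: "ck (- {0}) k (inverse :: complex \<Rightarrow> complex)"
proof (induction k)
  case (Suc k)
  have o: "open (- {0::complex})" by auto
  have D: "(inverse has_derivative (\<lambda>h. - (inverse x * h * inverse x))) (at x)" if "x \<in> - {0}" for x :: complex
    using has_derivative_inverse'[of x UNIV] that by auto
  show ?case
  proof (simp only: ck.simps, intro conjI ballI)
    show "inverse differentiable at x" if "x \<in> - {0}" for x :: complex
      using D[OF that] by (auto simp: differentiable_def)
    fix b :: complex
    have "ck (- {0}) k (\<lambda>x::complex. inverse x * inverse x)"
      using ck_bilinear[OF o bounded_bilinear_mult Suc Suc] by simp
    then have "ck (- {0}) k (\<lambda>x::complex. - (b * (inverse x * inverse x)))"
      by (rule ck_linear[OF o bounded_linear_minus[OF bounded_linear_mult_right]])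
    then show "ck (- {0}) k (pd inverse b)"
      by (rule ck_cong[OF o]) (simp add: pd_at[OF D])
  qed
qed simp

lemma sm_inverse: "sm (- {0}) (inverse :: complex \<Rightarrow> complex)"
  by (simp add: sm_def ck_inverse)


definition hp :: "real poly \<Rightarrow> real \<Rightarrow> real" where
  "hp p t = (if t > 0 then poly p (inverse t) * exp (- inverse t) else 0)"

definition dq :: "real poly \<Rightarrow> real poly" where
  "dq p = monom 1 2 * (p - pderiv p)"

lemma hp_lim_top: "((\<lambda>s::real. poly p s * exp (- s)) \<longlongrightarrow> 0) at_top"
proof -
  have "((\<lambda>s. \<Sum>i\<le>degree p. coeff p i * (s ^ i / exp s)) \<longlongrightarrow> (\<Sum>i\<le>degree p. coeff p i * 0)) at_top"
    by (intro tendsto_sum tendsto_mult tendsto_const tendsto_power_div_exp_0)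
  moreover have "(\<Sum>i\<le>degree p. coeff p i * (s ^ i / exp s)) = poly p s * exp (- s)" for s
    by (simp add: poly_altdef sum_distrib_right exp_minus divide_inverse mult.assoc)
  ultimately show ?thesis by simp
qed

lemma hp_lim: "((\<lambda>t. poly p (inverse t) * exp (- inverse t)) \<longlongrightarrow> 0) (at_right (0::real))"
  using filterlim_compose[OF hp_lim_top filterlim_inverse_at_top_right] by simp

lemma hp_deriv_pos:
  assumes "t > 0"
  shows "DERIV (hp p) t :> hp (dq p) t"
proof -
  have D: "DERIV (\<lambda>t. poly p (inverse t) * exp (- inverse t)) t :>
      poly (pderiv p) (inverse t) * (- (inverse t * inverse t)) * exp (- inverse t)
      + poly p (inverse t) * (exp (- inverse t) * (inverse t * inverse t))"
    using assms
    by (auto intro!: derivative_eq_intros DERIV_chain2[OF poly_DERIV] simp: power2_eq_square)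
  have e: "poly (pderiv p) (inverse t) * (- (inverse t * inverse t)) * exp (- inverse t)
      + poly p (inverse t) * (exp (- inverse t) * (inverse t * inverse t)) = hp (dq p) t"
    using assms by (simp add: hp_def dq_def poly_monom algebra_simps power2_eq_square)
  show ?thesis
    using has_field_derivative_transform_within_open[OF D[unfolded e], of "{0<..}" "hp p"] assms
    by (auto simp: hp_def)
qed

lemma hp_deriv_neg:
  assumes "t < 0"
  shows "DERIV (hp p) t :> hp (dq p) t"
proof -
  have "DERIV (\<lambda>t. 0) t :> 0" by simp
  then have "DERIV (\<lambda>t. 0) t :> hp (dq p) t" using assms by (simp add: hp_def)
  then show ?thesis
    using has_field_derivative_transform_within_open[of "\<lambda>t. 0" _ t "{..<0}" "hp p"] assms
    by (auto simp: hp_def)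
qed

lemma hp_deriv_zero: "DERIV (hp p) 0 :> hp (dq p) 0"
proof -
  have "((\<lambda>h. hp p h / h) \<longlongrightarrow> 0) (at_left 0)"
  proof (rule Lim_transform_eventually[OF tendsto_const])
    show "\<forall>\<^sub>F h in at_left 0. 0 = hp p h / h"
      by (simp add: eventually_at_filter hp_def)
  qed
  moreover have "((\<lambda>h. hp p h / h) \<longlongrightarrow> 0) (at_right 0)"
  proof (rule Lim_transform_eventually[OF hp_lim[of "pCons 0 p"]])
    show "\<forall>\<^sub>F h in at_right 0. poly (pCons 0 p) (inverse h) * exp (- inverse h) = hp p h / h"
      by (rule eventually_mono[OF eventually_at_right_less]) (simp add: hp_def divide_inverse)
  qed
  ultimately have "((\<lambda>h. hp p h / h) \<longlongrightarrow> 0) (at 0)"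
    by (simp add: filterlim_at_split)
  then show ?thesis by (simp add: DERIV_def hp_def)
qed

lemma hp_deriv: "DERIV (hp p) t :> hp (dq p) t"
  using hp_deriv_pos hp_deriv_neg hp_deriv_zero by (metis linorder_neqE_linordered_idom)

lemma ck_hp: "ck (UNIV::real set) k (hp p)"
proof (induction k arbitrary: p)
  case (Suc k)
  have D: "(hp p has_derivative (\<lambda>v. hp (dq p) t * v)) (at t)" for t
    using hp_deriv[of p t] by (simp add: has_field_derivative_def)
  show ?case
  proof (simp only: ck.simps, intro conjI ballI)
    show "hp p differentiable at t" for t using D[of t] by (auto simp: differentiable_def)
    fix b :: real assume "b \<in> Basis"
    then have b: "b = 1" by simp
    have "pd (hp p) b = hp (dq p)" using b by (auto simp: pd_at[OF D])
    then show "ck UNIV k (pd (hp p) b)" using Suc by simp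
  qed
qed simp

definition psi :: "real \<Rightarrow> real" where "psi = hp 1"

lemma sm_psi: "sm UNIV psi" by (simp add: sm_def psi_def ck_hp)

lemma psi_pos: "t > 0 \<Longrightarrow> psi t > 0" by (simp add: psi_def hp_def)
lemma psi_zero: "t \<le> 0 \<Longrightarrow> psi t = 0" by (simp add: psi_def hp_def)
lemma psi_nonneg: "psi t \<ge> 0" by (simp add: psi_def hp_def)

lemma sm_dist2: "sm UNIV (\<lambda>y::'e::euclidean_space. (y - c) \<bullet> (y - c))"
proof -
  have h: "sm UNIV (\<lambda>y::'e. y - c)"
    apply (rule sm_diff) apply (rule open_UNIV) apply (rule sm_id) apply (rule sm_const) done
  show ?thesis by (rule sm_bilinear[OF open_UNIV bounded_bilinear_inner h h])
qed

definition bump :: "'e::euclidean_space \<Rightarrow> real \<Rightarrow> 'e \<Rightarrow> complex" where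
  "bump c R y = complex_of_real (psi (R\<^sup>2 - (y - c) \<bullet> (y - c)))"

lemma dist_sq: "(y - c) \<bullet> (y - c) = (dist y c)\<^sup>2"
  by (simp add: dist_norm power2_norm_eq_inner)

lemma sm_bump: "sm UNIV (bump (c::'e::euclidean_space) R)"
proof -
  have "sm UNIV (\<lambda>y::'e. R\<^sup>2 - (y - c) \<bullet> (y - c))"
    apply (rule sm_diff) apply (rule open_UNIV) apply (rule sm_const) apply (rule sm_dist2) done
  then have "sm UNIV (\<lambda>y::'e. psi (R\<^sup>2 - (y - c) \<bullet> (y - c)))"
    by (rule sm_compose[OF open_UNIV open_UNIV _ sm_psi, rotated]) simp
  then show ?thesis unfolding bump_def by (rule sm_linear[OF open_UNIV bounded_linear_of_real])
qed

lemma bump_center: "R > 0 \<Longrightarrow> bump c R c \<noteq> 0"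
  using psi_pos[of "R\<^sup>2"] by (simp add: bump_def)

lemma bump_outside: "R > 0 \<Longrightarrow> dist y c \<ge> R \<Longrightarrow> bump c R y = 0"
  by (simp add: bump_def dist_sq psi_zero power_mono)

definition cutoff :: "'e::euclidean_space \<Rightarrow> real \<Rightarrow> real \<Rightarrow> 'e \<Rightarrow> complex" where
  "cutoff c r1 r2 y = complex_of_real (psi (r2\<^sup>2 - (y - c) \<bullet> (y - c)))
     * inverse (complex_of_real (psi (r2\<^sup>2 - (y - c) \<bullet> (y - c)) + psi ((y - c) \<bullet> (y - c) - r1\<^sup>2)))"

lemma cutoff_den_pos:
  assumes "0 < r1" "r1 < r2"
  shows "psi (r2\<^sup>2 - (y - c) \<bullet> (y - c)) + psi ((y - c) \<bullet> (y - c) - r1\<^sup>2) > 0"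
proof (cases "dist y c < r2")
  case True
  then have "(dist y c)\<^sup>2 < r2\<^sup>2" using assms by (simp add: power_strict_mono)
  then show ?thesis using psi_pos[of "r2\<^sup>2 - (y - c) \<bullet> (y - c)"] psi_nonneg by (simp add: dist_sq add_pos_nonneg)
next
  case False
  then have "r1\<^sup>2 < (dist y c)\<^sup>2" using assms by (simp add: power_strict_mono)
  then show ?thesis using psi_pos[of "(y - c) \<bullet> (y - c) - r1\<^sup>2"] psi_nonneg by (simp add: dist_sq add_nonneg_pos)
qed

lemma sm_cutoff:
  assumes "0 < r1" "r1 < r2"
  shows "sm UNIV (cutoff (c::'e::euclidean_space) r1 r2)"
proof -
  have a0: "sm UNIV (\<lambda>y::'e. r2\<^sup>2 - (y - c) \<bullet> (y - c))"
    apply (rule sm_diff) apply (rule open_UNIV) apply (rule sm_const) apply (rule sm_dist2) done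
  have b0: "sm UNIV (\<lambda>y::'e. (y - c) \<bullet> (y - c) - r1\<^sup>2)"
    apply (rule sm_diff) apply (rule open_UNIV) apply (rule sm_dist2) apply (rule sm_const) done
  have a: "sm UNIV (\<lambda>y::'e. psi (r2\<^sup>2 - (y - c) \<bullet> (y - c)))"
    by (rule sm_compose[OF open_UNIV open_UNIV _ sm_psi a0]) simp
  have b: "sm UNIV (\<lambda>y::'e. psi ((y - c) \<bullet> (y - c) - r1\<^sup>2))"
    by (rule sm_compose[OF open_UNIV open_UNIV _ sm_psi b0]) simp
  have ab: "sm UNIV (\<lambda>y::'e. complex_of_real (psi (r2\<^sup>2 - (y - c) \<bullet> (y - c)) + psi ((y - c) \<bullet> (y - c) - r1\<^sup>2)))"
    by (rule sm_linear[OF open_UNIV bounded_linear_of_real sm_add[OF open_UNIV a b]])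
  have inv: "sm UNIV (\<lambda>y::'e. inverse (complex_of_real (psi (r2\<^sup>2 - (y - c) \<bullet> (y - c)) + psi ((y - c) \<bullet> (y - c) - r1\<^sup>2))))"
  proof (rule sm_compose[OF open_UNIV _ _ sm_inverse ab])
    show "open (- {0::complex})" by auto
    show "(\<lambda>y. complex_of_real (psi (r2\<^sup>2 - (y - c) \<bullet> (y - c)) + psi ((y - c) \<bullet> (y - c) - r1\<^sup>2))) ` UNIV \<subseteq> - {0}"
    proof -
      have "complex_of_real (psi (r2\<^sup>2 - (y - c) \<bullet> (y - c)) + psi ((y - c) \<bullet> (y - c) - r1\<^sup>2)) \<noteq> 0" for y :: 'e
        using cutoff_den_pos[OF assms, of y c] by (simp only: of_real_eq_0_iff)
      then show ?thesis by (auto simp del: of_real_add)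
    qed
  qed
  show ?thesis unfolding cutoff_def
    by (rule sm_mult[OF open_UNIV sm_linear[OF open_UNIV bounded_linear_of_real a] inv])
qed

lemma cutoff_one:
  assumes "0 < r1" "r1 < r2" "dist y c < r1"
  shows "cutoff c r1 r2 y = 1"
proof -
  have "(dist y c)\<^sup>2 < r1\<^sup>2" using assms by (simp add: power_strict_mono)
  moreover have "r1\<^sup>2 < r2\<^sup>2" using assms by (simp add: power_strict_mono)
  ultimately have "psi ((y - c) \<bullet> (y - c) - r1\<^sup>2) = 0" "psi (r2\<^sup>2 - (y - c) \<bullet> (y - c)) > 0"
    by (auto simp: dist_sq intro!: psi_zero psi_pos)
  then show ?thesis by (simp add: cutoff_def)
qed

lemma cutoff_zero:
  assumes "0 < r1" "r1 < r2" "dist y c \<ge> r2"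
  shows "cutoff c r1 r2 y = 0"
proof -
  have "r2\<^sup>2 \<le> (dist y c)\<^sup>2" using assms by (simp add: power_mono)
  then show ?thesis by (simp add: cutoff_def dist_sq psi_zero)
qed


lemma atlas_chart:
  assumes "smooth_atlas A" "(U, \<phi>) \<in> A"
  shows "open U" "open (\<phi> ` U)" "homeomorphism U (\<phi> ` U) \<phi> (inv_into U \<phi>)"
  using assms unfolding smooth_atlas_def by auto

lemma atlas_trans:
  assumes "smooth_atlas A" "(U, \<phi>) \<in> A" "(V, \<psi>) \<in> A"
  shows "sm (\<phi> ` (U \<inter> V)) (\<psi> \<circ> inv_into U \<phi>)"
  using assms unfolding smooth_atlas_def smooth_on_sm by fast

lemma atlas_cover:
  assumes "smooth_atlas A"
  shows "\<exists>U \<phi>. (U, \<phi>) \<in> A \<and> p \<in> U"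
proof -
  have "p \<in> \<Union>(fst ` A)" using assms unfolding smooth_atlas_def by simp
  then obtain a where "a \<in> A" "p \<in> fst a" by blast
  then show ?thesis by (cases a) auto
qed

lemma hom_open_image:
  assumes "homeomorphism V W \<psi> \<psi>i" "open W" "Oo \<subseteq> V" "open Oo"
  shows "open (\<psi> ` Oo)"
proof -
  have h: "\<forall>x\<in>V. \<psi>i (\<psi> x) = x" "\<psi> ` V = W" "\<forall>y\<in>W. \<psi> (\<psi>i y) = y" "continuous_on W \<psi>i"
    using assms(1) unfolding homeomorphism_def by auto
  have "\<psi> ` Oo = W \<inter> \<psi>i -` Oo"
  proof
    show "\<psi> ` Oo \<subseteq> W \<inter> \<psi>i -` Oo"
    proof
      fix z assume "z \<in> \<psi> ` Oo"
      then obtain x where x: "x \<in> Oo" "z = \<psi> x" by blast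
      then have "x \<in> V" using assms(3) by blast
      then show "z \<in> W \<inter> \<psi>i -` Oo" using x h(1,2) by auto
    qed
    show "W \<inter> \<psi>i -` Oo \<subseteq> \<psi> ` Oo"
    proof
      fix z assume z: "z \<in> W \<inter> \<psi>i -` Oo"
      then have "z = \<psi> (\<psi>i z)" using h(3) by auto
      then show "z \<in> \<psi> ` Oo" using z by blast
    qed
  qed
  moreover have "\<forall>B. open B \<longrightarrow> open (W \<inter> \<psi>i -` B)"
    using continuous_on_open_vimage[OF assms(2), of \<psi>i] h(4) by (simp add: Int_commute)
  then have "open (W \<inter> \<psi>i -` Oo)" using assms(4) by simp
  ultimately show ?thesis by simp
qed

lemma open_preimage: "open U \<Longrightarrow> continuous_on U f \<Longrightarrow> open B \<Longrightarrow> open (U \<inter> f -` B)"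
  using continuous_on_open_vimage[of U f] by (simp add: Int_commute)

lemma smooth_fun_sm: "smooth_fun A f \<longleftrightarrow> (\<forall>(U, \<phi>)\<in>A. sm (\<phi> ` U) (f \<circ> inv_into U \<phi>))"
  unfolding smooth_fun_def smooth_on_sm by simp

lemma smooth_fun_op2:
  fixes A :: "('m::topological_space set \<times> ('m \<Rightarrow> 'e::euclidean_space)) set"
  assumes "smooth_atlas A"
    and op: "\<And>(U::'e::euclidean_space set) F G. open U \<Longrightarrow> sm U F \<Longrightarrow> sm U G \<Longrightarrow> sm U (\<lambda>z. h (F z) (G z))"
    and "smooth_fun A f" "smooth_fun A g"
  shows "smooth_fun A (\<lambda>x. h (f x) (g x))"
  unfolding smooth_fun_sm
proof (clarify)
  fix U \<phi> assume c: "(U, \<phi>) \<in> A"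
  have "sm (\<phi> ` U) (\<lambda>z. h ((f \<circ> inv_into U \<phi>) z) ((g \<circ> inv_into U \<phi>) z))"
    using op[OF atlas_chart(2)[OF assms(1) c]] assms(3,4) c unfolding smooth_fun_sm by blast
  then show "sm (\<phi> ` U) ((\<lambda>x. h (f x) (g x)) \<circ> inv_into U \<phi>)" by (simp add: comp_def)
qed

lemma smooth_fun_const: "smooth_fun A (\<lambda>x. c)"
  unfolding smooth_fun_sm by (auto simp: comp_def sm_const)

lemma smooth_fun_add: "smooth_atlas A \<Longrightarrow> smooth_fun A f \<Longrightarrow> smooth_fun A g \<Longrightarrow> smooth_fun A (\<lambda>x. f x + g x)"
  by (rule smooth_fun_op2[where h="(+)"]) (auto intro: sm_add)

lemma smooth_fun_diff: "smooth_atlas A \<Longrightarrow> smooth_fun A f \<Longrightarrow> smooth_fun A g \<Longrightarrow> smooth_fun A (\<lambda>x. f x - g x)"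
  by (rule smooth_fun_op2[where h="(-)"]) (auto intro: sm_diff)

lemma smooth_fun_mult: "smooth_atlas A \<Longrightarrow> smooth_fun A f \<Longrightarrow> smooth_fun A g \<Longrightarrow> smooth_fun A (\<lambda>x. f x * g x)"
  by (rule smooth_fun_op2[where h="(*)"]) (auto intro: sm_mult)

lemma smooth_fun_cnj: "smooth_atlas A \<Longrightarrow> smooth_fun A f \<Longrightarrow> smooth_fun A (\<lambda>x. cnj (f x))"
  using smooth_fun_op2[where h="\<lambda>a b. cnj a" and g=f] sm_linear[OF _ bounded_linear_cnj] by blast

lemma smooth_fun_sum:
  assumes "smooth_atlas A" "finite S" "\<And>i. i \<in> S \<Longrightarrow> smooth_fun A (f i)"
  shows "smooth_fun A (\<lambda>x. \<Sum>i\<in>S. f i x)"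
  using assms(2,3)
proof (induction S rule: finite_induct)
  case empty then show ?case by (simp add: smooth_fun_const)
next
  case (insert a S)
  then show ?case by (simp add: smooth_fun_add[OF assms(1)])
qed

lemma pullback:
  fixes g :: "'e::euclidean_space \<Rightarrow> complex" and A :: "('m::t2_space set \<times> ('m \<Rightarrow> 'e)) set"
  assumes atlas: "smooth_atlas A" and c: "(U, \<phi>) \<in> A"
    and S: "open S" "S \<subseteq> \<phi> ` U" "cball c0 \<rho> \<subseteq> S" and g: "sm S g" "\<And>z. z \<notin> cball c0 \<rho> \<Longrightarrow> g z = 0"
  shows "smooth_fun A (\<lambda>y. if y \<in> U then g (\<phi> y) else 0)"
    and "supp (\<lambda>y. if y \<in> U then g (\<phi> y) else 0) \<subseteq> inv_into U \<phi> ` cball c0 \<rho>"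
    and "compact (inv_into U \<phi> ` cball c0 \<rho>)"
proof -
  define gs where "gs = (\<lambda>y. if y \<in> U then g (\<phi> y) else 0)"
  define K where "K = inv_into U \<phi> ` cball c0 \<rho>"
  note ch = atlas_chart[OF atlas c]
  have hom: "\<forall>x\<in>U. inv_into U \<phi> (\<phi> x) = x" "\<forall>y\<in>\<phi> ` U. \<phi> (inv_into U \<phi> y) = y"
    "continuous_on (\<phi> ` U) (inv_into U \<phi>)" "continuous_on U \<phi>"
    using ch(3) unfolding homeomorphism_def by auto
  show cK: "compact (inv_into U \<phi> ` cball c0 \<rho>)"
    using S hom(3) by (intro compact_continuous_image) (auto intro: continuous_on_subset)
  then have clK: "closed K" unfolding K_def by (rule compact_imp_closed)
  have KU: "K \<subseteq> U" using S unfolding K_def by (auto intro: inv_into_into)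
  have Kphi: "\<phi> y \<in> cball c0 \<rho>" if "y \<in> K" for y
    using that S hom(2) unfolding K_def by auto
  have nz: "{y. gs y \<noteq> 0} \<subseteq> K"
  proof
    fix y assume "y \<in> {y. gs y \<noteq> 0}"
    then have y: "y \<in> U" "g (\<phi> y) \<noteq> 0" by (auto simp: gs_def split: if_splits)
    then have "\<phi> y \<in> cball c0 \<rho>" using g(2) by blast
    then show "y \<in> K" using hom(1) y unfolding K_def by (metis image_eqI)
  qed
  then show "supp (\<lambda>y. if y \<in> U then g (\<phi> y) else 0) \<subseteq> inv_into U \<phi> ` cball c0 \<rho>"
    unfolding supp_def gs_def[symmetric] K_def[symmetric] using clK by (simp add: closure_minimal)
  show "smooth_fun A (\<lambda>y. if y \<in> U then g (\<phi> y) else 0)"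
    unfolding gs_def[symmetric] smooth_fun_sm
  proof (clarify)
    fix V \<psi> assume cV: "(V, \<psi>) \<in> A"
    note chV = atlas_chart[OF atlas cV]
    have homV: "\<forall>x\<in>V. inv_into V \<psi> (\<psi> x) = x" "\<forall>y\<in>\<psi> ` V. \<psi> (inv_into V \<psi> y) = y"
      using chV(3) unfolding homeomorphism_def by auto
    show "sm (\<psi> ` V) (gs \<circ> inv_into V \<psi>)"
    proof (rule sm_local[OF chV(2)])
      fix z assume z: "z \<in> \<psi> ` V"
      define y where "y = inv_into V \<psi> z"
      have yV: "y \<in> V" unfolding y_def using z by (auto intro: inv_into_into)
      have zy: "z = \<psi> y" unfolding y_def using z by (simp add: f_inv_into_f)
      show "\<exists>W g'. open W \<and> z \<in> W \<and> W \<subseteq> \<psi> ` V \<and> sm W g' \<and> (\<forall>x\<in>W. (gs \<circ> inv_into V \<psi>) x = g' x)"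
      proof (cases "y \<in> U \<and> \<phi> y \<in> S")
        case True
        define Oo where "Oo = V \<inter> (U \<inter> \<phi> -` S)"
        have "open (U \<inter> \<phi> -` S)" by (rule open_preimage[OF ch(1) hom(4) S(1)])
        then have oO: "open Oo"
          unfolding Oo_def using chV(1) by blast
        define W where "W = \<psi> ` Oo"
        have oW: "open W" unfolding W_def by (rule hom_open_image[OF chV(3,2) _ oO]) (auto simp: Oo_def)
        have "y \<in> Oo" unfolding Oo_def using True yV by simp
        then have zW: "z \<in> W" unfolding W_def zy by (rule imageI)
        have WV: "W \<subseteq> \<psi> ` V" unfolding W_def Oo_def by auto
        have invO: "inv_into V \<psi> w \<in> Oo" if "w \<in> W" for w
          using that homV(1) unfolding W_def Oo_def by auto
        have T: "sm W (\<phi> \<circ> inv_into V \<psi>)"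
          by (rule sm_subset[OF _ atlas_trans[OF atlas cV c]]) (auto simp: W_def Oo_def)
        have TS: "(\<phi> \<circ> inv_into V \<psi>) ` W \<subseteq> S" using invO by (auto simp: Oo_def)
        have "sm W (\<lambda>w. g ((\<phi> \<circ> inv_into V \<psi>) w))"
          by (rule sm_compose[OF oW S(1) TS g(1) T])
        moreover have "\<forall>w\<in>W. (gs \<circ> inv_into V \<psi>) w = g ((\<phi> \<circ> inv_into V \<psi>) w)"
          using invO by (auto simp: gs_def Oo_def)
        ultimately show ?thesis using oW zW WV by blast
      next
        case False
        then have yK: "y \<notin> K" using KU Kphi S(3) by blast
        define Oo where "Oo = V - K"
        have oO: "open Oo" unfolding Oo_def using chV(1) clK by blast
        define W where "W = \<psi> ` Oo"
        have oW: "open W" unfolding W_def by (rule hom_open_image[OF chV(3,2) _ oO]) (auto simp: Oo_def)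
        have "y \<in> Oo" unfolding Oo_def using yK yV by simp
        then have zW: "z \<in> W" unfolding W_def zy by (rule imageI)
        have WV: "W \<subseteq> \<psi> ` V" unfolding W_def Oo_def by auto
        have invO: "inv_into V \<psi> w \<in> Oo" if "w \<in> W" for w
          using that homV(1) unfolding W_def Oo_def by auto
        have "\<forall>w\<in>W. (gs \<circ> inv_into V \<psi>) w = 0"
          using invO nz by (auto simp: Oo_def)
        then show ?thesis using oW zW WV sm_const[of W 0] by blast
      qed
    qed
  qed
qed


lemma fps_cs_key:
  fixes \<alpha> \<beta> \<gamma> :: "complex fps"
  assumes H: "fps_nonneg (fps_const c * (fps_X^N * \<alpha>) + fps_const (cnj c) * (fps_X^N * \<beta>)
                 + fps_const (c * cnj c) * (fps_X^(2*N) * \<gamma>))"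
    and below: "\<And>i. i < m \<Longrightarrow> fps_nth \<alpha> i = 0 \<and> fps_nth \<beta> i = 0"
    and N: "N = Suc m"
    and v: "c * fps_nth \<alpha> m + cnj c * fps_nth \<beta> m \<noteq> 0"
  shows "Im (c * fps_nth \<alpha> m + cnj c * fps_nth \<beta> m) = 0 \<and> Re (c * fps_nth \<alpha> m + cnj c * fps_nth \<beta> m) > 0"
proof -
  define D where "D = fps_const c * (fps_X^N * \<alpha>) + fps_const (cnj c) * (fps_X^N * \<beta>)
                 + fps_const (c * cnj c) * (fps_X^(2*N) * \<gamma>)"
  have coef: "fps_nth D j = (if j < N then 0 else c * fps_nth \<alpha> (j - N) + cnj c * fps_nth \<beta> (j - N))
      + (if j < 2 * N then 0 else c * cnj c * fps_nth \<gamma> (j - 2 * N))" for j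
    unfolding D_def by (simp add: fps_X_power_mult_nth)
  have Dm: "fps_nth D (N + m) = c * fps_nth \<alpha> m + cnj c * fps_nth \<beta> m"
    unfolding coef using N by simp
  have Dlow: "fps_nth D i = 0" if "i < N + m" for i
  proof -
    have "i < 2 * N" using that N by simp
    moreover have "i < N \<or> i - N < m" using that by linarith
    ultimately show ?thesis unfolding coef using below by auto
  qed
  have sd: "subdegree D = N + m" by (rule subdegreeI) (use Dm v Dlow in auto)
  have "D \<noteq> 0" using Dm v by auto
  moreover have "fps_nonneg D" using H unfolding D_def .
  ultimately show ?thesis unfolding fps_nonneg_def sd Dm[symmetric] by auto
qed

lemma fps_cs:
  fixes \<alpha> \<beta> \<gamma> :: "complex fps"
  assumes H: "\<And>c N. fps_nonneg (fps_const c * (fps_X^N * \<alpha>) + fps_const (cnj c) * (fps_X^N * \<beta>)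
                 + fps_const (c * cnj c) * (fps_X^(2*N) * \<gamma>))"
  shows "\<alpha> = 0 \<and> \<beta> = 0"
proof (rule ccontr)
  assume "\<not> (\<alpha> = 0 \<and> \<beta> = 0)"
  then have ex: "\<exists>i. fps_nth \<alpha> i \<noteq> 0 \<or> fps_nth \<beta> i \<noteq> 0" by (auto simp: fps_eq_iff)
  define m where "m = (LEAST i. fps_nth \<alpha> i \<noteq> 0 \<or> fps_nth \<beta> i \<noteq> 0)"
  have nz: "fps_nth \<alpha> m \<noteq> 0 \<or> fps_nth \<beta> m \<noteq> 0" unfolding m_def by (rule LeastI_ex[OF ex])
  have below: "fps_nth \<alpha> i = 0 \<and> fps_nth \<beta> i = 0" if "i < m" for i
    using not_less_Least[OF that[unfolded m_def]] by auto
  define a where "a = fps_nth \<alpha> m"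
  define b where "b = fps_nth \<beta> m"
  have key: "Im (c * a + cnj c * b) = 0 \<and> Re (c * a + cnj c * b) > 0" if "c * a + cnj c * b \<noteq> 0" for c
    using fps_cs_key[OF H[of c "Suc m"] below refl] that unfolding a_def b_def by blast
  show False
  proof (cases "a + b = 0")
    case False
    have k1: "Re (1 * a + cnj 1 * b) > 0" using key[of 1] False by simp
    have k2: "Re ((-1) * a + cnj (-1) * b) > 0" using key[of "-1"] False by (simp add: add_eq_0_iff)
    show False using k1 k2 by simp
  next
    case True
    then have b: "b = - a" by (simp add: add_eq_0_iff)
    then have a: "a \<noteq> 0" using nz unfolding a_def b_def by auto
    have v1: "\<i> * a + cnj \<i> * b \<noteq> 0" using a b by simp
    have v2: "(- \<i>) * a + cnj (- \<i>) * b \<noteq> 0" using a b by simp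
    have k1: "Re (\<i> * a + cnj \<i> * b) > 0" using key[OF v1] by blast
    have k2: "Re ((- \<i>) * a + cnj (- \<i>) * b) > 0" using key[OF v2] by blast
    show False using k1 k2 by simp
  qed
qed


definition scal :: "complex \<Rightarrow> 'm fseries \<Rightarrow> 'm fseries" where
  "scal c F = (\<lambda>n x. c * F n x)"

definition shift :: "nat \<Rightarrow> 'm fseries \<Rightarrow> 'm fseries" where
  "shift k F = (\<lambda>n. if k \<le> n then F (n - k) else (\<lambda>x. 0))"

lemma sum_flip: "(\<Sum>s\<le>(m::nat). f s) = (\<Sum>s\<le>m. f (m - s))"
proof -
  have "(\<Sum>s<Suc m. f (Suc m - Suc s)) = (\<Sum>s<Suc m. f s)" by (rule sum.nat_diff_reindex)
  then show ?thesis by (simp add: lessThan_Suc_atMost)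
qed

lemma supp_out: "x \<notin> supp f \<Longrightarrow> f x = 0"
  using closure_subset[of "{x. f x \<noteq> 0}"] unfolding supp_def by auto

lemma supp_sum:
  assumes "finite I"
  shows "supp (\<lambda>x. \<Sum>i\<in>I. f i x) \<subseteq> (\<Union>i\<in>I. supp (f i))"
proof -
  have "{x. (\<Sum>i\<in>I. f i x) \<noteq> 0} \<subseteq> (\<Union>i\<in>I. supp (f i))"
  proof
    fix x assume "x \<in> {x. (\<Sum>i\<in>I. f i x) \<noteq> 0}"
    then have "\<not> (\<forall>i\<in>I. f i x = 0)" using sum.neutral[of I "\<lambda>i. f i x"] by blast
    then obtain i where "i \<in> I" "f i x \<noteq> 0" by blast
    then have "x \<in> supp (f i)" using supp_out by blast
    then show "x \<in> (\<Union>i\<in>I. supp (f i))" using \<open>i \<in> I\<close> by blast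
  qed
  moreover have "closed (\<Union>i\<in>I. supp (f i))"
    using assms by (intro closed_UN) (auto simp: supp_def)
  ultimately show ?thesis unfolding supp_def by (rule closure_minimal)
qed

lemma supp_mono: "(\<And>x. f x \<noteq> 0 \<Longrightarrow> g x \<noteq> 0) \<Longrightarrow> supp f \<subseteq> supp g"
  unfolding supp_def by (rule closure_mono) blast

lemma compact_supp_sub: "supp f \<subseteq> K \<Longrightarrow> compact K \<Longrightarrow> compact (supp f)"
proof -
  assume "supp f \<subseteq> K" "compact K"
  moreover have "closed (supp f)" by (simp add: supp_def)
  ultimately show ?thesis by (metis compact_Int_closed inf.absorb_iff2)
qed

locale sp =
  fixes A :: "('m::{t2_space, second_countable_topology} set \<times> ('m \<Rightarrow> 'e::euclidean_space)) set"
    and pb :: "('m \<Rightarrow> complex) \<Rightarrow> ('m \<Rightarrow> complex) \<Rightarrow> ('m \<Rightarrow> complex)"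
    and Mr :: "nat \<Rightarrow> ('m \<Rightarrow> complex) \<Rightarrow> ('m \<Rightarrow> complex) \<Rightarrow> ('m \<Rightarrow> complex)"
    and \<omega> :: "'m fseries \<Rightarrow> complex fps"
  assumes atlas: "smooth_atlas A" and lsp: "local_star_product A pb Mr"
    and pos: "positive_functional A Mr \<omega>"
begin

abbreviation "sf \<equiv> smooth_fun A"
abbreviation "ss \<equiv> smooth_series A"
abbreviation "cs \<equiv> compact_series A"
abbreviation "st \<equiv> star Mr"

lemmas lsp_c = lsp[unfolded local_star_product_def]
lemmas lsp1 = lsp_c[THEN conjunct1, rule_format]
lemmas lsp2 = lsp_c[THEN conjunct2, THEN conjunct1, rule_format]
lemmas lsp3 = lsp_c[THEN conjunct2, THEN conjunct2, THEN conjunct1, rule_format]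
lemmas lsp5 = lsp_c[THEN conjunct2, THEN conjunct2, THEN conjunct2, THEN conjunct2, THEN conjunct1, rule_format]
lemmas lsp6 = lsp_c[THEN conjunct2, THEN conjunct2, THEN conjunct2, THEN conjunct2, THEN conjunct2, THEN conjunct1, rule_format]
lemmas lsp7 = lsp_c[THEN conjunct2, THEN conjunct2, THEN conjunct2, THEN conjunct2, THEN conjunct2, THEN conjunct2, rule_format]

lemma Mr_smooth: "sf f \<Longrightarrow> sf g \<Longrightarrow> sf (Mr r f g)"
  using lsp1[of f g f] by blast
lemma Mr_lin1: "sf f \<Longrightarrow> sf g \<Longrightarrow> sf h \<Longrightarrow> Mr r (\<lambda>x. a * f x + g x) h = (\<lambda>x. a * Mr r f h x + Mr r g h x)"
  using lsp1[of f g h] by blast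
lemma Mr_lin2: "sf f \<Longrightarrow> sf g \<Longrightarrow> sf h \<Longrightarrow> Mr r h (\<lambda>x. a * f x + g x) = (\<lambda>x. a * Mr r h f x + Mr r h g x)"
  using lsp1[of f g h] by blast
lemma Mr_supp: "sf f \<Longrightarrow> sf g \<Longrightarrow> supp (Mr r f g) \<subseteq> supp f \<inter> supp g"
  using lsp2[of f g] by blast
lemma Mr0: "sf f \<Longrightarrow> sf g \<Longrightarrow> Mr 0 f g = (\<lambda>x. f x * g x)"
  using lsp3[of f g] by blast
lemma Mr_const1: "r \<ge> 1 \<Longrightarrow> sf f \<Longrightarrow> Mr r (\<lambda>x. c) f = (\<lambda>x. 0)"
  using lsp5[of r f c] by blast
lemma Mr_const2: "r \<ge> 1 \<Longrightarrow> sf f \<Longrightarrow> Mr r f (\<lambda>x. c) = (\<lambda>x. 0)"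
  using lsp5[of r f c] by blast
lemma Mr_herm: "sf f \<Longrightarrow> sf g \<Longrightarrow> (\<lambda>x. cnj (Mr r f g x)) = Mr r (\<lambda>x. cnj (g x)) (\<lambda>x. cnj (f x))"
  using lsp6[of f g r] by blast
lemma assoc: "F \<in> ss \<Longrightarrow> G \<in> ss \<Longrightarrow> H \<in> ss \<Longrightarrow> st (st F G) H = st F (st G H)"
  using lsp7[of F G H] by blast

lemma Mr_zero1: "sf h \<Longrightarrow> Mr r (\<lambda>x. 0) h = (\<lambda>x. 0)"
proof -
  assume h: "sf h"
  have "Mr r (\<lambda>x. 0) h = (\<lambda>x. Mr r (\<lambda>x. 0) h x + Mr r (\<lambda>x. 0) h x)"
    using Mr_lin1[OF smooth_fun_const smooth_fun_const h, of r 1 0 0] by simp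
  then show ?thesis by (simp add: fun_eq_iff)
qed

lemma Mr_zero2: "sf h \<Longrightarrow> Mr r h (\<lambda>x. 0) = (\<lambda>x. 0)"
proof -
  assume h: "sf h"
  have "Mr r h (\<lambda>x. 0) = (\<lambda>x. Mr r h (\<lambda>x. 0) x + Mr r h (\<lambda>x. 0) x)"
    using Mr_lin2[OF smooth_fun_const smooth_fun_const h, of r 1 0 0] by simp
  then show ?thesis by (simp add: fun_eq_iff)
qed

lemma Mr_scal1: "sf f \<Longrightarrow> sf h \<Longrightarrow> Mr r (\<lambda>x. a * f x) h = (\<lambda>x. a * Mr r f h x)"
  using Mr_lin1[OF _ smooth_fun_const, of f h r a 0] Mr_zero1 by simp
lemma Mr_scal2: "sf f \<Longrightarrow> sf h \<Longrightarrow> Mr r h (\<lambda>x. a * f x) = (\<lambda>x. a * Mr r h f x)"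
  using Mr_lin2[OF _ smooth_fun_const, of f h r a 0] Mr_zero2 by simp
lemma Mr_add1: "sf f \<Longrightarrow> sf g \<Longrightarrow> sf h \<Longrightarrow> Mr r (\<lambda>x. f x + g x) h = (\<lambda>x. Mr r f h x + Mr r g h x)"
  using Mr_lin1[of f g h r 1] by simp
lemma Mr_add2: "sf f \<Longrightarrow> sf g \<Longrightarrow> sf h \<Longrightarrow> Mr r h (\<lambda>x. f x + g x) = (\<lambda>x. Mr r h f x + Mr r h g x)"
  using Mr_lin2[of f g h r 1] by simp

lemma ss_iff: "F \<in> ss \<longleftrightarrow> (\<forall>n. sf (F n))" by (simp add: smooth_series_def)
lemma cs_iff: "F \<in> cs \<longleftrightarrow> (\<forall>n. sf (F n) \<and> compact (supp (F n)))" by (simp add: compact_series_def)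
lemma cs_ss: "F \<in> cs \<Longrightarrow> F \<in> ss" by (simp add: ss_iff cs_iff)

lemma star_apply: "st F G n = (\<lambda>x. \<Sum>r\<le>n. \<Sum>s\<le>n - r. Mr r (F s) (G (n - r - s)) x)"
  by (simp add: star_def)

lemma star_ss: "F \<in> ss \<Longrightarrow> G \<in> ss \<Longrightarrow> st F G \<in> ss"
  unfolding ss_iff star_apply
  by (intro allI smooth_fun_sum[OF atlas] finite_atMost Mr_smooth) auto

lemma supp_star_right:
  assumes "F \<in> ss" "G \<in> ss"
  shows "supp (st F G n) \<subseteq> (\<Union>t\<le>n. supp (G t))"
proof -
  have "supp (st F G n) \<subseteq> (\<Union>r\<le>n. supp (\<lambda>x. \<Sum>s\<le>n - r. Mr r (F s) (G (n - r - s)) x))"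
    unfolding star_apply by (rule supp_sum) simp
  also have "\<dots> \<subseteq> (\<Union>r\<le>n. \<Union>s\<le>n - r. supp (Mr r (F s) (G (n - r - s))))"
    by (intro UN_mono order_refl supp_sum) simp
  also have "\<dots> \<subseteq> (\<Union>t\<le>n. supp (G t))"
  proof (intro UN_least)
    fix r s assume "r \<in> {..n}" "s \<in> {..n - r}"
    have "supp (Mr r (F s) (G (n - r - s))) \<subseteq> supp (G (n - r - s))"
      using Mr_supp[of "F s" "G (n - r - s)" r] assms by (auto simp: ss_iff)
    then show "supp (Mr r (F s) (G (n - r - s))) \<subseteq> (\<Union>t\<le>n. supp (G t))" by force
  qed
  finally show ?thesis .
qed

lemma supp_star_left:
  assumes "F \<in> ss" "G \<in> ss"
  shows "supp (st F G n) \<subseteq> (\<Union>s\<le>n. supp (F s))"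
proof -
  have "supp (st F G n) \<subseteq> (\<Union>r\<le>n. supp (\<lambda>x. \<Sum>s\<le>n - r. Mr r (F s) (G (n - r - s)) x))"
    unfolding star_apply by (rule supp_sum) simp
  also have "\<dots> \<subseteq> (\<Union>r\<le>n. \<Union>s\<le>n - r. supp (Mr r (F s) (G (n - r - s))))"
    by (intro UN_mono order_refl supp_sum) simp
  also have "\<dots> \<subseteq> (\<Union>s\<le>n. supp (F s))"
  proof (intro UN_least)
    fix r s assume "r \<in> {..n}" "s \<in> {..n - r}"
    have "supp (Mr r (F s) (G (n - r - s))) \<subseteq> supp (F s)"
      using Mr_supp[of "F s" "G (n - r - s)" r] assms by (auto simp: ss_iff)
    then show "supp (Mr r (F s) (G (n - r - s))) \<subseteq> (\<Union>s\<le>n. supp (F s))" using \<open>s \<in> {..n - r}\<close> by force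
  qed
  finally show ?thesis .
qed

lemma star_cs_right: "F \<in> ss \<Longrightarrow> G \<in> cs \<Longrightarrow> st F G \<in> cs"
proof -
  assume F: "F \<in> ss" and G: "G \<in> cs"
  have "compact (supp (st F G n))" for n
  proof (rule compact_supp_sub[OF supp_star_right[OF F cs_ss[OF G]]])
    show "compact (\<Union>t\<le>n. supp (G t))" using G by (intro compact_UN) (auto simp: cs_iff)
  qed
  then show ?thesis using star_ss[OF F cs_ss[OF G]] by (simp add: ss_iff cs_iff)
qed

lemma star_cs_left: "F \<in> cs \<Longrightarrow> G \<in> ss \<Longrightarrow> st F G \<in> cs"
proof -
  assume F: "F \<in> cs" and G: "G \<in> ss"
  have "compact (supp (st F G n))" for n
  proof (rule compact_supp_sub[OF supp_star_left[OF cs_ss[OF F] G]])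
    show "compact (\<Union>s\<le>n. supp (F s))" using F by (intro compact_UN) (auto simp: cs_iff)
  qed
  then show ?thesis using star_ss[OF cs_ss[OF F] G] by (simp add: ss_iff cs_iff)
qed

end


context sp begin

lemma sf_zero: "sf (\<lambda>x. 0)" by (rule smooth_fun_const)

lemma cnj_ss: "F \<in> ss \<Longrightarrow> series_cnj F \<in> ss"
  by (simp add: ss_iff series_cnj_def smooth_fun_cnj[OF atlas])

lemma supp_cnj: "supp (\<lambda>x. cnj (f x)) = supp f"
  by (simp add: supp_def)

lemma cnj_cs: "F \<in> cs \<Longrightarrow> series_cnj F \<in> cs"
  by (simp add: cs_iff series_cnj_def smooth_fun_cnj[OF atlas] supp_cnj)

lemma cnj_cnj: "series_cnj (series_cnj F) = F"
  by (simp add: series_cnj_def)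

lemma shift_ss: "F \<in> ss \<Longrightarrow> shift k F \<in> ss"
  by (simp add: ss_iff shift_def sf_zero)

lemma supp_zero: "supp (\<lambda>x. 0::complex) = {}"
  by (simp add: supp_def)

lemma shift_cs: "F \<in> cs \<Longrightarrow> shift k F \<in> cs"
  by (simp add: cs_iff shift_def sf_zero supp_zero)

lemma scal_ss: "F \<in> ss \<Longrightarrow> scal c F \<in> ss"
  by (simp add: ss_iff scal_def smooth_fun_mult[OF atlas smooth_fun_const])

lemma scal_cs: "F \<in> cs \<Longrightarrow> scal c F \<in> cs"
proof -
  assume F: "F \<in> cs"
  have "supp (\<lambda>x. c * F n x) \<subseteq> supp (F n)" for n by (rule supp_mono) simp
  then have "compact (supp (\<lambda>x. c * F n x))" for n
    by (rule compact_supp_sub) (use F in \<open>simp add: cs_iff\<close>)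
  then show ?thesis using F
    by (auto simp: cs_iff scal_def smooth_fun_mult[OF atlas smooth_fun_const])
qed

lemma add_ss: "F \<in> ss \<Longrightarrow> G \<in> ss \<Longrightarrow> series_add F G \<in> ss"
  by (simp add: ss_iff series_add_def smooth_fun_add[OF atlas])

lemma add_cs: "F \<in> cs \<Longrightarrow> G \<in> cs \<Longrightarrow> series_add F G \<in> cs"
proof -
  assume F: "F \<in> cs" and G: "G \<in> cs"
  have "supp (\<lambda>x. F n x + G n x) \<subseteq> supp (F n) \<union> supp (G n)" for n
  proof -
    have "supp (\<lambda>x. \<Sum>i\<in>{True, False}. (if i then F n x else G n x)) \<subseteq> (\<Union>i\<in>{True, False}. supp (\<lambda>x. if i then F n x else G n x))"
      by (rule supp_sum) simp
    then show ?thesis by (simp add: add.commute)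
  qed
  moreover have "compact (supp (F n) \<union> supp (G n))" for n using F G by (simp add: cs_iff compact_Un)
  ultimately have "compact (supp (\<lambda>x. F n x + G n x))" for n by (rule compact_supp_sub)
  then show ?thesis using F G
    by (auto simp: cs_iff series_add_def smooth_fun_add[OF atlas])
qed

lemma zero_cs: "(\<lambda>n x. 0) \<in> cs"
  by (simp add: cs_iff sf_zero supp_zero)

lemma shift_cnj: "series_cnj (shift k F) = shift k (series_cnj F)"
  by (simp add: series_cnj_def shift_def fun_eq_iff)

lemma star_cnj:
  assumes F: "F \<in> ss" and G: "G \<in> ss"
  shows "series_cnj (st F G) = st (series_cnj G) (series_cnj F)"
proof (rule ext, rule ext)
  fix n x
  have h: "cnj (Mr r (F s) (G t) x) = Mr r (series_cnj G t) (series_cnj F s) x" for r s t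
    using fun_cong[OF Mr_herm[of "F s" "G t" r], of x] F G by (simp add: ss_iff series_cnj_def)
  have "series_cnj (st F G) n x = (\<Sum>r\<le>n. \<Sum>s\<le>n - r. Mr r (series_cnj G (n - r - s)) (series_cnj F s) x)"
    by (simp add: series_cnj_def star_apply h)
  also have "\<dots> = (\<Sum>r\<le>n. \<Sum>s\<le>n - r. Mr r (series_cnj G s) (series_cnj F (n - r - s)) x)"
  proof (rule sum.cong[OF refl])
    fix r assume r: "r \<in> {..n}"
    show "(\<Sum>s\<le>n - r. Mr r (series_cnj G (n - r - s)) (series_cnj F s) x) =
          (\<Sum>s\<le>n - r. Mr r (series_cnj G s) (series_cnj F (n - r - s)) x)"
    proof (subst sum_flip, rule sum.cong[OF refl])
      fix s assume "s \<in> {..n - r}"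
      then have "n - r - (n - r - s) = s" "n - r - s = n - r - s" using r by auto
      then show "Mr r (series_cnj G (n - r - (n - r - s))) (series_cnj F (n - r - s)) x =
          Mr r (series_cnj G s) (series_cnj F (n - r - s)) x" by simp
    qed
  qed
  also have "\<dots> = st (series_cnj G) (series_cnj F) n x" by (simp add: star_apply)
  finally show "series_cnj (st F G) n x = st (series_cnj G) (series_cnj F) n x" .
qed

lemma star_add1:
  assumes "F \<in> ss" "G \<in> ss" "H \<in> ss"
  shows "st (series_add F G) H = series_add (st F H) (st G H)"
proof (rule ext, rule ext)
  fix n x
  have "Mr r (series_add F G s) (H t) x = Mr r (F s) (H t) x + Mr r (G s) (H t) x" for r s t
    using Mr_add1[of "F s" "G s" "H t" r] assms by (simp add: ss_iff series_add_def)
  then show "st (series_add F G) H n x = series_add (st F H) (st G H) n x"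
    by (simp add: star_apply series_add_def sum.distrib)
qed

lemma star_add2:
  assumes "F \<in> ss" "G \<in> ss" "H \<in> ss"
  shows "st H (series_add F G) = series_add (st H F) (st H G)"
proof (rule ext, rule ext)
  fix n x
  have "Mr r (H s) (series_add F G t) x = Mr r (H s) (F t) x + Mr r (H s) (G t) x" for r s t
    using Mr_add2[of "F t" "G t" "H s" r] assms by (simp add: ss_iff series_add_def)
  then show "st H (series_add F G) n x = series_add (st H F) (st H G) n x"
    by (simp add: star_apply series_add_def sum.distrib)
qed

lemma star_scal1:
  assumes "F \<in> ss" "H \<in> ss"
  shows "st (scal c F) H = scal c (st F H)"
proof (rule ext, rule ext)
  fix n x
  have "Mr r (scal c F s) (H t) x = c * Mr r (F s) (H t) x" for r s t
    using Mr_scal1[of "F s" "H t" r c] assms by (simp add: ss_iff scal_def)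
  then show "st (scal c F) H n x = scal c (st F H) n x"
    by (simp add: star_apply scal_def sum_distrib_left)
qed

lemma star_scal2:
  assumes "F \<in> ss" "H \<in> ss"
  shows "st H (scal c F) = scal c (st H F)"
proof (rule ext, rule ext)
  fix n x
  have "Mr r (H s) (scal c F t) x = c * Mr r (H s) (F t) x" for r s t
    using Mr_scal2[of "F t" "H s" r c] assms by (simp add: ss_iff scal_def)
  then show "st H (scal c F) n x = scal c (st H F) n x"
    by (simp add: star_apply scal_def sum_distrib_left)
qed

lemma star_shift2:
  assumes F: "F \<in> ss" and G: "G \<in> ss"
  shows "st F (shift k G) = shift k (st F G)"
proof (rule ext, rule ext)
  fix n x
  have trm: "Mr r (F s) (shift k G t) x = (if k \<le> t then Mr r (F s) (G (t - k)) x else 0)" for r s t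
    using F G Mr_zero2[of "F s" r] by (simp add: shift_def ss_iff)
  show "st F (shift k G) n x = shift k (st F G) n x"
  proof (cases "k \<le> n")
    case False
    then show ?thesis unfolding star_apply trm by (auto simp: shift_def intro!: sum.neutral)
  next
    case True
    define m where "m = n - k"
    have n: "n = m + k" using True unfolding m_def by simp
    have "st F (shift k G) n x = (\<Sum>r\<le>n. \<Sum>s\<le>n - r. if r + s \<le> m then Mr r (F s) (G (m - r - s)) x else 0)"
      unfolding star_apply trm
      by (intro sum.cong refl) (auto simp: n)
    also have "\<dots> = (\<Sum>r\<le>m. \<Sum>s\<le>n - r. if r + s \<le> m then Mr r (F s) (G (m - r - s)) x else 0)"
      by (rule sum.mono_neutral_right) (auto simp: n)
    also have "\<dots> = (\<Sum>r\<le>m. \<Sum>s\<le>m - r. Mr r (F s) (G (m - r - s)) x)"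
    proof (rule sum.cong[OF refl])
      fix r assume r: "r \<in> {..m}"
      show "(\<Sum>s\<le>n - r. if r + s \<le> m then Mr r (F s) (G (m - r - s)) x else 0) = (\<Sum>s\<le>m - r. Mr r (F s) (G (m - r - s)) x)"
        by (rule sum.mono_neutral_cong_right) (use r in \<open>auto simp: n\<close>)
    qed
    also have "\<dots> = shift k (st F G) n x" by (simp add: shift_def star_apply True m_def)
    finally show ?thesis .
  qed
qed

lemma star_shift1:
  assumes F: "F \<in> ss" and G: "G \<in> ss"
  shows "st (shift k F) G = shift k (st F G)"
proof -
  have "st (shift k F) G = series_cnj (series_cnj (st (shift k F) G))" by (simp add: cnj_cnj)
  also have "\<dots> = series_cnj (st (series_cnj G) (shift k (series_cnj F)))"
    by (simp add: star_cnj shift_ss F G shift_cnj)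
  also have "\<dots> = series_cnj (shift k (st (series_cnj G) (series_cnj F)))"
    by (simp add: star_shift2 cnj_ss F G)
  also have "\<dots> = shift k (st F G)"
    by (simp add: shift_cnj star_cnj[symmetric] cnj_ss F G cnj_cnj)
  finally show ?thesis .
qed

end


context sp begin

lemmas pos1 = pos[unfolded positive_functional_def, THEN conjunct1, rule_format]
lemmas pos2 = pos[unfolded positive_functional_def, THEN conjunct2, rule_format]

lemma sum_delta_mult: "(\<Sum>k\<le>(n::nat). (if k = N then (c::complex) else 0) * f k) = (if N \<le> n then c * f N else 0)"
proof -
  have "(\<Sum>k\<le>n. (if k = N then c else 0) * f k) = (\<Sum>k\<le>n. if k = N then c * f k else 0)"
    by (rule sum.cong) auto
  also have "\<dots> = (if N \<in> {..n} then c * f N else 0)" by (rule sum.delta[OF finite_atMost])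
  finally show ?thesis by simp
qed

lemma scale_X_power: "series_scale (fps_X ^ N) F = shift N F"
  by (simp add: series_scale_def shift_def fun_eq_iff sum_delta_mult)

lemma shift_0: "shift 0 F = F" by (simp add: shift_def)

lemma scale_one: "series_scale 1 F = F"
  using scale_X_power[of 0 F] by (simp add: shift_0)

lemma scale_const: "series_scale (fps_const c) F = scal c F"
  by (simp add: series_scale_def scal_def fun_eq_iff sum_delta_mult)

lemma add_zero: "series_add F (\<lambda>n x. 0) = F" by (simp add: series_add_def)

lemma omega_zero: "\<omega> (\<lambda>n x. 0) = 0"
proof -
  have "\<omega> (series_add (series_scale 1 (\<lambda>n x. 0)) (\<lambda>n x. 0)) = 1 * \<omega> (\<lambda>n x. 0) + \<omega> (\<lambda>n x. 0)"
    by (rule pos1[OF zero_cs zero_cs])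
  then show ?thesis by (simp add: scale_one add_zero)
qed

lemma omega_add: "F \<in> cs \<Longrightarrow> G \<in> cs \<Longrightarrow> \<omega> (series_add F G) = \<omega> F + \<omega> G"
  using pos1[of F G 1] by (simp add: scale_one)

lemma omega_scale: "F \<in> cs \<Longrightarrow> \<omega> (series_scale a F) = a * \<omega> F"
  using pos1[OF _ zero_cs, of F a] by (simp add: add_zero omega_zero)

lemma omega_scal: "F \<in> cs \<Longrightarrow> \<omega> (scal c F) = fps_const c * \<omega> F"
  using omega_scale[of F "fps_const c"] by (simp add: scale_const)

lemma omega_shift: "F \<in> cs \<Longrightarrow> \<omega> (shift N F) = fps_X ^ N * \<omega> F"
  using omega_scale[of F "fps_X ^ N"] by (simp add: scale_X_power)

lemma cnj_add: "series_cnj (series_add F G) = series_add (series_cnj F) (series_cnj G)"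
  by (simp add: series_cnj_def series_add_def)

lemma cnj_scal: "series_cnj (scal c F) = scal (cnj c) (series_cnj F)"
  by (simp add: series_cnj_def scal_def)

lemma scal_scal: "scal a (scal b F) = scal (a * b) F"
  by (simp add: scal_def mult.assoc)

lemmas cl = cnj_cs cnj_ss shift_ss shift_cs scal_ss scal_cs add_ss add_cs star_cs_right star_ss cs_ss

lemma expand:
  assumes P: "P \<in> cs" and Q: "Q \<in> cs"
  shows "\<omega> (st (series_cnj (series_add P (scal c (shift N Q)))) (series_add P (scal c (shift N Q)))) =
    \<omega> (st (series_cnj P) P) + fps_const c * (fps_X ^ N * \<omega> (st (series_cnj P) Q))
    + fps_const (cnj c) * (fps_X ^ N * \<omega> (st (series_cnj Q) P))
    + fps_const (c * cnj c) * (fps_X ^ (2 * N) * \<omega> (st (series_cnj Q) Q))"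
proof -
  define P' where "P' = series_cnj P"
  define Q' where "Q' = series_cnj Q"
  have P': "P' \<in> cs" and Q': "Q' \<in> cs" using P Q by (simp_all add: P'_def Q'_def cl)
  have "st (series_cnj (series_add P (scal c (shift N Q)))) (series_add P (scal c (shift N Q)))
     = st (series_add P' (scal (cnj c) (shift N Q'))) (series_add P (scal c (shift N Q)))"
    by (simp add: cnj_add cnj_scal shift_cnj P'_def Q'_def)
  also have "\<dots> = series_add (series_add (st P' P) (scal c (shift N (st P' Q))))
       (series_add (scal (cnj c) (shift N (st Q' P))) (scal (cnj c * c) (shift N (shift N (st Q' Q)))))"
    using P Q P' Q'
    by (simp add: star_add1 star_add2 star_scal1 star_scal2 star_shift1 star_shift2 scal_scal cl)
      (simp add: fun_eq_iff series_add_def scal_def shift_def algebra_simps)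
  finally have e: "st (series_cnj (series_add P (scal c (shift N Q)))) (series_add P (scal c (shift N Q))) = \<dots>" .
  have "\<omega> (series_add (series_add (st P' P) (scal c (shift N (st P' Q))))
       (series_add (scal (cnj c) (shift N (st Q' P))) (scal (cnj c * c) (shift N (shift N (st Q' Q))))))
     = \<omega> (st P' P) + fps_const c * (fps_X ^ N * \<omega> (st P' Q))
       + (fps_const (cnj c) * (fps_X ^ N * \<omega> (st Q' P)) + fps_const (cnj c * c) * (fps_X ^ N * (fps_X ^ N * \<omega> (st Q' Q))))"
    using P Q P' Q' by (simp add: omega_add omega_scal omega_shift cl)
  also have "\<dots> = \<omega> (st P' P) + fps_const c * (fps_X ^ N * \<omega> (st P' Q))
    + fps_const (cnj c) * (fps_X ^ N * \<omega> (st Q' P))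
    + fps_const (c * cnj c) * (fps_X ^ (2 * N) * \<omega> (st Q' Q))"
  proof -
    have x2: "fps_X ^ N * (fps_X ^ N * w) = fps_X ^ (2 * N) * w" for w :: "complex fps"
      by (metis mult_2 power_add mult.assoc)
    have cc: "cnj c * c = c * cnj c" by (rule mult.commute)
    show ?thesis by (simp only: x2 cc add.assoc)
  qed
  finally show ?thesis unfolding e P'_def Q'_def .
qed

lemma CS:
  assumes P: "P \<in> cs" "\<omega> (st (series_cnj P) P) = 0" and Q: "Q \<in> cs"
  shows "\<omega> (st (series_cnj P) Q) = 0 \<and> \<omega> (st (series_cnj Q) P) = 0"
proof (rule fps_cs)
  fix c N
  have "series_add P (scal c (shift N Q)) \<in> cs" using P Q by (simp add: cl)
  from pos2[OF this] show "fps_nonneg (fps_const c * (fps_X ^ N * \<omega> (st (series_cnj P) Q))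
      + fps_const (cnj c) * (fps_X ^ N * \<omega> (st (series_cnj Q) P))
      + fps_const (c * cnj c) * (fps_X ^ (2 * N) * \<omega> (st (series_cnj Q) Q)))"
    unfolding expand[OF P(1) Q] P(2) by simp
qed

abbreviation "J \<equiv> gns_ideal A Mr \<omega>"

lemma J_iff: "F \<in> J \<longleftrightarrow> F \<in> cs \<and> \<omega> (st (series_cnj F) F) = 0"
  by (simp add: gns_ideal_def)

lemma J_ideal:
  assumes K: "K \<in> ss" and G: "G \<in> J"
  shows "st K G \<in> J"
proof -
  have Gc: "G \<in> cs" and G0: "\<omega> (st (series_cnj G) G) = 0" using G by (auto simp: J_iff)
  have KG: "st K G \<in> cs" using K Gc by (simp add: cl)
  have "st (series_cnj (st K G)) (st K G) = st (st (series_cnj G) (series_cnj K)) (st K G)"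
    using K Gc by (simp add: star_cnj cl)
  also have "\<dots> = st (series_cnj G) (st (series_cnj K) (st K G))"
    using K Gc by (simp add: assoc cl)
  finally have e: "st (series_cnj (st K G)) (st K G) = st (series_cnj G) (st (series_cnj K) (st K G))" .
  have "st (series_cnj K) (st K G) \<in> cs" using K Gc by (simp add: cl)
  then have "\<omega> (st (series_cnj G) (st (series_cnj K) (st K G))) = 0"
    using CS[OF Gc G0] by blast
  then show ?thesis using KG e by (simp add: J_iff)
qed

lemma J_lin:
  assumes P: "P \<in> J" and Q: "Q \<in> J"
  shows "series_add P (scal c Q) \<in> J"
proof -
  have Pc: "P \<in> cs" and P0: "\<omega> (st (series_cnj P) P) = 0" using P by (auto simp: J_iff)
  have Qc: "Q \<in> cs" and Q0: "\<omega> (st (series_cnj Q) Q) = 0" using Q by (auto simp: J_iff)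
  have c1: "\<omega> (st (series_cnj P) Q) = 0" "\<omega> (st (series_cnj Q) P) = 0" using CS[OF Pc P0 Qc] by auto
  have "\<omega> (st (series_cnj (series_add P (scal c (shift 0 Q)))) (series_add P (scal c (shift 0 Q)))) = 0"
    unfolding expand[OF Pc Qc] using P0 Q0 c1 by simp
  moreover have "series_add P (scal c Q) \<in> cs" using Pc Qc by (simp add: cl)
  ultimately show ?thesis by (simp add: J_iff shift_0)
qed

lemma zero_J: "(\<lambda>n x. 0) \<in> J"
proof -
  have "st (series_cnj (\<lambda>n x. 0)) (\<lambda>n x. 0) = (\<lambda>n x. 0)"
    by (simp add: star_apply series_cnj_def Mr_zero1 sf_zero fun_eq_iff)
  then show ?thesis by (simp add: J_iff zero_cs omega_zero)
qed

lemma vec_J: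
  assumes X: "X \<in> J"
  shows "gns_vec A Mr \<omega> X = J"
proof
  show "gns_vec A Mr \<omega> X \<subseteq> J"
  proof
    fix H assume "H \<in> gns_vec A Mr \<omega> X"
    then have H: "H \<in> cs" "series_diff H X \<in> J" by (auto simp: gns_vec_def)
    have "series_add (series_diff H X) (scal 1 X) \<in> J" by (rule J_lin[OF H(2) X])
    moreover have "series_add (series_diff H X) (scal 1 X) = H"
      by (simp add: series_add_def series_diff_def scal_def)
    ultimately show "H \<in> J" by simp
  qed
  show "J \<subseteq> gns_vec A Mr \<omega> X"
  proof
    fix H assume H: "H \<in> J"
    have "series_add H (scal (-1) X) \<in> J" by (rule J_lin[OF H X])
    moreover have "series_add H (scal (-1) X) = series_diff H X"
      by (simp add: series_add_def series_diff_def scal_def)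
    ultimately show "H \<in> gns_vec A Mr \<omega> X" using H by (simp add: gns_vec_def J_iff)
  qed
qed

end


definition ser0 :: "('m \<Rightarrow> complex) \<Rightarrow> 'm fseries" where
  "ser0 f = (\<lambda>n. if n = 0 then f else (\<lambda>x. 0))"

context sp begin

lemma ser0_ss: "sf f \<Longrightarrow> ser0 f \<in> ss"
  by (simp add: ss_iff ser0_def sf_zero)

lemma ser0_cs: "sf f \<Longrightarrow> compact (supp f) \<Longrightarrow> ser0 f \<in> cs"
  by (simp add: cs_iff ser0_def sf_zero supp_zero)

lemma star_ser0:
  assumes F: "F \<in> ss" and f: "sf f"
  shows "st F (ser0 f) n x = (\<Sum>r\<le>n. Mr r (F (n - r)) f x)"
proof -
  have "st F (ser0 f) n x = (\<Sum>r\<le>n. \<Sum>s\<le>n - r. if s = n - r then Mr r (F s) f x else 0)"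
    unfolding star_apply
  proof (intro sum.cong refl)
    fix r s assume "r \<in> {..n}" "s \<in> {..n - r}"
    then show "Mr r (F s) (ser0 f (n - r - s)) x = (if s = n - r then Mr r (F s) f x else 0)"
      using Mr_zero2[of "F s" r] F by (auto simp: ser0_def ss_iff)
  qed
  also have "\<dots> = (\<Sum>r\<le>n. Mr r (F (n - r)) f x)"
    by (rule sum.cong[OF refl]) (simp add: sum.delta[OF finite_atMost])
  finally show ?thesis .
qed

lemma bump_at:
  "\<exists>bp. sf bp \<and> compact (supp bp) \<and> bp p \<noteq> 0"
proof -
  obtain U \<phi> where c: "(U, \<phi>) \<in> A" "p \<in> U" using atlas_cover[OF atlas] by blast
  note ch = atlas_chart[OF atlas c(1)]
  obtain R where R: "R > 0" "cball (\<phi> p) R \<subseteq> \<phi> ` U"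
    using ch(2) c(2) by (meson imageI open_contains_cball)
  have sm: "sm (\<phi> ` U) (bump (\<phi> p) R)" by (rule sm_subset[OF _ sm_bump]) simp
  have z: "bump (\<phi> p) R z = 0" if "z \<notin> cball (\<phi> p) R" for z
    using that R(1) by (intro bump_outside) (auto simp: dist_commute)
  note pb = pullback[OF atlas c(1) ch(2) order_refl R(2) sm z]
  define bp where "bp = (\<lambda>y. if y \<in> U then bump (\<phi> p) R (\<phi> y) else 0)"
  have "sf bp" using pb(1) unfolding bp_def .
  moreover have "compact (supp bp)" using pb(2,3) unfolding bp_def by (rule compact_supp_sub)
  moreover have "bp p \<noteq> 0" using c(2) bump_center[OF R(1)] by (simp add: bp_def)
  ultimately show ?thesis by blast
qed

lemma faithful_J: "faithful_functional A Mr \<omega> \<Longrightarrow> J = {(\<lambda>n x. 0)}"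
  by (simp add: faithful_functional_def)

lemma inj_if_faithful:
  assumes fa: "faithful_functional A Mr \<omega>"
  shows "inj_on (gns_rep A Mr \<omega>) ss"
proof (rule inj_onI)
  fix F F' assume F: "F \<in> ss" and F': "F' \<in> ss" and eq: "gns_rep A Mr \<omega> F = gns_rep A Mr \<omega> F'"
  have J0: "J = {(\<lambda>n x. 0)}" by (rule faithful_J[OF fa])
  have vec: "gns_vec A Mr \<omega> G = {G}" if "G \<in> cs" for G
  proof -
    have "series_diff H G = (\<lambda>n x. 0) \<longleftrightarrow> H = G" for H
      by (auto simp: series_diff_def fun_eq_iff)
    then show ?thesis using that by (auto simp: gns_vec_def J0)
  qed
  have rep: "gns_rep A Mr \<omega> Y (gns_vec A Mr \<omega> G) = {st Y G}" if "G \<in> cs" "Y \<in> ss" for G Y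
  proof -
    have sp: "gns_vec A Mr \<omega> G \<in> gns_space A Mr \<omega>" using that(1) by (simp add: gns_space_def)
    have "(SOME G'. G' \<in> cs \<and> gns_vec A Mr \<omega> G = gns_vec A Mr \<omega> G') = G"
    proof (rule some_equality)
      show "G \<in> cs \<and> gns_vec A Mr \<omega> G = gns_vec A Mr \<omega> G" using that(1) by simp
      fix G' assume "G' \<in> cs \<and> gns_vec A Mr \<omega> G = gns_vec A Mr \<omega> G'"
      then show "G' = G" using vec[OF that(1)] vec by auto
    qed
    then show ?thesis using sp vec[OF star_cs_right[OF that(2,1)]] by (simp add: gns_rep_def)
  qed
  have steq: "st F G = st F' G" if "G \<in> cs" for G
    using rep[OF that F] rep[OF that F'] eq by simp
  have "\<forall>p. F n p = F' n p" for n
  proof (induction n rule: less_induct)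
    case (less n)
    have prev: "F m = F' m" if "m < n" for m using less that by (simp add: fun_eq_iff)
    show ?case
    proof
      fix p
      obtain bp where bp: "sf bp" "compact (supp bp)" "bp p \<noteq> 0" using bump_at by blast
      have "st F (ser0 bp) n p = st F' (ser0 bp) n p" using steq[OF ser0_cs[OF bp(1,2)]] by simp
      then have e: "(\<Sum>r\<le>n. Mr r (F (n - r)) bp p) = (\<Sum>r\<le>n. Mr r (F' (n - r)) bp p)"
        using star_ser0[OF F bp(1)] star_ser0[OF F' bp(1)] by simp
      have "(\<Sum>r\<le>n. Mr r (F (n - r)) bp p) = Mr 0 (F n) bp p + (\<Sum>r\<in>{..n} - {0}. Mr r (F (n - r)) bp p)"
        by (subst sum.remove[OF finite_atMost, of 0]) auto
      moreover have "(\<Sum>r\<le>n. Mr r (F' (n - r)) bp p) = Mr 0 (F' n) bp p + (\<Sum>r\<in>{..n} - {0}. Mr r (F' (n - r)) bp p)"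
        by (subst sum.remove[OF finite_atMost, of 0]) auto
      moreover have "(\<Sum>r\<in>{..n} - {0}. Mr r (F (n - r)) bp p) = (\<Sum>r\<in>{..n} - {0}. Mr r (F' (n - r)) bp p)"
        by (rule sum.cong[OF refl]) (auto simp: prev)
      ultimately have "Mr 0 (F n) bp p = Mr 0 (F' n) bp p" using e by simp
      then have "F n p * bp p = F' n p * bp p"
        using Mr0[of "F n" bp] Mr0[of "F' n" bp] F F' bp(1) by (simp add: ss_iff)
      then show "F n p = F' n p" using bp(3) by simp
    qed
  qed
  then show "F = F'" by (simp add: fun_eq_iff)
qed

end


fun einv :: "(nat \<Rightarrow> ('m \<Rightarrow> complex) \<Rightarrow> ('m \<Rightarrow> complex) \<Rightarrow> ('m \<Rightarrow> complex)) \<Rightarrow> ('m \<Rightarrow> complex)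
    \<Rightarrow> ('m \<Rightarrow> complex) \<Rightarrow> 'm fseries \<Rightarrow> nat \<Rightarrow> ('m \<Rightarrow> complex)" where
  "einv Mr c th G n = (\<lambda>x. c x * ((if n = 0 then th x else 0) -
     (\<Sum>r\<le>n. \<Sum>s\<le>n - r. if r = 0 \<and> s = n then 0 else Mr r (einv Mr c th G s) (G (n - r - s)) x)))"

context sp begin

lemma star_split:
  "st E G n x = Mr 0 (E n) (G 0) x +
     (\<Sum>r\<le>n. \<Sum>s\<le>n - r. if r = 0 \<and> s = n then 0 else Mr r (E s) (G (n - r - s)) x)"
proof -
  have "st E G n x = (\<Sum>r\<le>n. \<Sum>s\<le>n - r. (if r = 0 \<and> s = n then Mr r (E s) (G (n - r - s)) x else 0)
      + (if r = 0 \<and> s = n then 0 else Mr r (E s) (G (n - r - s)) x))"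
    unfolding star_apply by (intro sum.cong refl) simp
  also have "\<dots> = (\<Sum>r\<le>n. \<Sum>s\<le>n - r. (if r = 0 \<and> s = n then Mr r (E s) (G (n - r - s)) x else 0))
      + (\<Sum>r\<le>n. \<Sum>s\<le>n - r. if r = 0 \<and> s = n then 0 else Mr r (E s) (G (n - r - s)) x)"
    by (simp add: sum.distrib)
  also have "(\<Sum>r\<le>n. \<Sum>s\<le>n - r. (if r = 0 \<and> s = n then Mr r (E s) (G (n - r - s)) x else 0))
      = (\<Sum>r\<le>n. if r = 0 then Mr 0 (E n) (G 0) x else 0)"
  proof (rule sum.cong[OF refl])
    fix r assume "r \<in> {..n}"
    show "(\<Sum>s\<le>n - r. (if r = 0 \<and> s = n then Mr r (E s) (G (n - r - s)) x else 0))
      = (if r = 0 then Mr 0 (E n) (G 0) x else 0)"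
    proof (cases "r = 0")
      case True
      then show ?thesis by simp
    qed simp
  qed
  also have "\<dots> = Mr 0 (E n) (G 0) x" by (simp add: sum.delta[OF finite_atMost])
  finally show ?thesis .
qed

lemma sf_if0: "(\<not> P \<Longrightarrow> sf M) \<Longrightarrow> sf (\<lambda>x. if P then 0 else M x)"
  by (cases P) (simp_all add: sf_zero)

lemma supp_sub_closed: "(\<And>x. x \<notin> K \<Longrightarrow> f x = 0) \<Longrightarrow> closed K \<Longrightarrow> supp f \<subseteq> K"
  unfolding supp_def by (rule closure_minimal) auto


lemma recursion:
  assumes cc: "sf cc" and th: "sf th" and G: "G \<in> ss" and K: "closed K"
    and thK: "\<And>x. x \<notin> K \<Longrightarrow> th x = 0" and inv: "\<And>x. x \<in> K \<Longrightarrow> cc x * G 0 x = 1"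
  defines "e \<equiv> einv Mr cc th G"
  shows "e \<in> ss" "\<And>n x. x \<notin> K \<Longrightarrow> e n x = 0" "st e G = ser0 th"
proof -
  have e_eq: "e n = (\<lambda>x. cc x * ((if n = 0 then th x else 0) -
     (\<Sum>r\<le>n. \<Sum>s\<le>n - r. if r = 0 \<and> s = n then 0 else Mr r (e s) (G (n - r - s)) x)))" for n
    unfolding e_def by (rule einv.simps)
  define rest where "rest n x = (\<Sum>r\<le>n. \<Sum>s\<le>n - r. if r = 0 \<and> s = n then 0 else Mr r (e s) (G (n - r - s)) x)" for n x
  have e_eq': "e n x = cc x * ((if n = 0 then th x else 0) - rest n x)" for n x
    by (simp add: e_eq rest_def)
  have Gs: "sf (G t)" for t using G by (simp add: ss_iff)
  have main: "sf (e n) \<and> (\<forall>x. x \<notin> K \<longrightarrow> e n x = 0)" for n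
  proof (induction n rule: less_induct)
    case (less n)
    have IH1: "sf (e s)" if "s < n" for s using less that by blast
    have IH2: "supp (e s) \<subseteq> K" if sn: "s < n" for s
    proof (rule supp_sub_closed[OF _ K])
      fix x assume "x \<notin> K" then show "e s x = 0" using less sn by blast
    qed
    have lt: "s < n" if "r \<le> n" "s \<le> n - r" "\<not> (r = 0 \<and> s = n)" for r s using that by auto
    have rest_sf: "sf (rest n)"
      unfolding rest_def[abs_def]
      by (intro smooth_fun_sum[OF atlas] finite_atMost sf_if0 Mr_smooth IH1 Gs lt) auto
    have rest0: "rest n x = 0" if "x \<notin> K" for x
      unfolding rest_def
    proof (intro sum.neutral ballI)
      fix r s assume r: "r \<in> {..n}" and s: "s \<in> {..n - r}"
      show "(if r = 0 \<and> s = n then 0 else Mr r (e s) (G (n - r - s)) x) = 0"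
      proof (cases "r = 0 \<and> s = n")
        case False
        then have sn: "s < n" using lt r s by auto
        have "supp (Mr r (e s) (G (n - r - s))) \<subseteq> K" using Mr_supp[OF IH1[OF sn] Gs] IH2[OF sn] by blast
        then show ?thesis using False that supp_out by auto
      qed simp
    qed
    have "sf (\<lambda>x. if n = 0 then th x else 0)" by (cases "n = 0") (simp_all add: th sf_zero)
    then have "sf (\<lambda>x. cc x * ((if n = 0 then th x else 0) - rest n x))"
      by (intro smooth_fun_mult[OF atlas cc] smooth_fun_diff[OF atlas] rest_sf)
    moreover have "e n = (\<lambda>x. cc x * ((if n = 0 then th x else 0) - rest n x))"
      by (rule ext) (simp add: e_eq')
    ultimately have "sf (e n)" by simp
    moreover have "e n x = 0" if "x \<notin> K" for x using that thK rest0 by (simp add: e_eq')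
    ultimately show ?case by blast
  qed
  show es: "e \<in> ss" using main by (simp add: ss_iff)
  show eK: "\<And>n x. x \<notin> K \<Longrightarrow> e n x = 0" using main by blast
  have suppe: "supp (e s) \<subseteq> K" for s by (rule supp_sub_closed[OF _ K]) (rule eK)
  have restK: "rest n x = 0" if "x \<notin> K" for n x
    unfolding rest_def
  proof (intro sum.neutral ballI)
    fix r s
    have "supp (Mr r (e s) (G (n - r - s))) \<subseteq> supp (e s)" using Mr_supp[of "e s" "G (n - r - s)" r] es Gs
      by (auto simp: ss_iff)
    then have "supp (Mr r (e s) (G (n - r - s))) \<subseteq> K" using suppe[of s] by blast
    then show "(if r = 0 \<and> s = n then 0 else Mr r (e s) (G (n - r - s)) x) = 0" using that supp_out by auto
  qed
  show "st e G = ser0 th"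
  proof (rule ext, rule ext)
    fix n x
    have "st e G n x = e n x * G 0 x + rest n x"
      using star_split[of e G n x] Mr0[of "e n" "G 0"] es Gs by (simp add: ss_iff rest_def)
    also have "\<dots> = ser0 th n x"
    proof (cases "x \<in> K")
      case True
      have "e n x * G 0 x = (cc x * G 0 x) * ((if n = 0 then th x else 0) - rest n x)"
        by (simp add: e_eq' algebra_simps)
      also have "\<dots> = (if n = 0 then th x else 0) - rest n x" using inv[OF True] by simp
      finally show ?thesis by (simp add: ser0_def)
    next
      case False
      then show ?thesis using eK restK thK by (simp add: ser0_def)
    qed
    finally show "st e G n x = ser0 th n x" .
  qed
qed

lemma absorb:
  assumes th: "sf th" and Oz: "open Oz" "\<And>x. x \<in> Oz \<Longrightarrow> th x = 1" and K1: "K1 \<subseteq> Oz"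
    and u: "u \<in> ss" "\<And>n. supp (u n) \<subseteq> K1"
  shows "st u (ser0 th) = u"
proof (rule ext, rule ext)
  fix n x
  have us: "sf (u j)" for j using u by (simp add: ss_iff)
  have thm1: "sf (\<lambda>x. th x - 1)" by (rule smooth_fun_diff[OF atlas th smooth_fun_const])
  have supp1: "supp (\<lambda>x. th x - 1) \<subseteq> - Oz"
    by (rule supp_sub_closed) (use Oz in auto)
  have vanish: "Mr r (u j) th x = 0" if "r \<ge> 1" for r j
  proof -
    have "Mr r (u j) (\<lambda>x. 1 * (th x - 1) + 1) = (\<lambda>x. 1 * Mr r (u j) (\<lambda>x. th x - 1) x + Mr r (u j) (\<lambda>x. 1) x)"
      by (rule Mr_lin2[OF thm1 smooth_fun_const us])
    then have e: "Mr r (u j) th = Mr r (u j) (\<lambda>x. th x - 1)"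
      using Mr_const2[OF that us[of j], of 1] by simp
    have "supp (Mr r (u j) (\<lambda>x. th x - 1)) \<subseteq> {}"
      using Mr_supp[OF us thm1, of r j] supp1 u(2)[of j] K1 by blast
    then show ?thesis unfolding e using supp_out by blast
  qed
  have "st u (ser0 th) n x = (\<Sum>r\<le>n. Mr r (u (n - r)) th x)" by (rule star_ser0[OF u(1) th])
  also have "\<dots> = Mr 0 (u n) th x + (\<Sum>r\<in>{..n} - {0}. Mr r (u (n - r)) th x)"
    by (subst sum.remove[OF finite_atMost, of 0]) auto
  also have "(\<Sum>r\<in>{..n} - {0}. Mr r (u (n - r)) th x) = 0"
    by (rule sum.neutral) (auto intro: vanish)
  also have "Mr 0 (u n) th x = u n x"
  proof (cases "x \<in> Oz")
    case True then show ?thesis using Mr0[OF us th] Oz by simp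
  next
    case False
    then have "x \<notin> supp (u n)" using u(2) K1 by blast
    then show ?thesis using Mr0[OF us th] supp_out[of x "u n"] by simp
  qed
  finally show "st u (ser0 th) n x = u n x" by simp
qed

end


context sp begin

lemma key_nonfaithful:
  assumes FJ: "F \<in> J" and Fnz: "F \<noteq> (\<lambda>n x. 0)"
  shows "\<exists>bp. sf bp \<and> (\<exists>p. bp p \<noteq> 0) \<and> (\<forall>G\<in>cs. st (ser0 bp) G \<in> J)"
proof -
  have Fc: "F \<in> cs" and F0: "\<omega> (st (series_cnj F) F) = 0" using FJ by (auto simp: J_iff)
  have ex: "\<exists>n. F n \<noteq> (\<lambda>x. 0)" using Fnz by (auto simp: fun_eq_iff)
  define k where "k = (LEAST n. F n \<noteq> (\<lambda>x. 0))"
  have Fk: "F k \<noteq> (\<lambda>x. 0)" unfolding k_def by (rule LeastI_ex[OF ex])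
  have Flow: "F j = (\<lambda>x. 0)" if "j < k" for j using not_less_Least[OF that[unfolded k_def]] by blast
  obtain p where p: "F k p \<noteq> 0" using Fk by (auto simp: fun_eq_iff)
  define F' where "F' = (\<lambda>n. F (n + k))"
  have F'c: "F' \<in> cs" using Fc by (simp add: cs_iff F'_def)
  have F's: "F' \<in> ss" using F'c by (rule cs_ss)
  have Fsh: "F = shift k F'"
  proof (rule ext)
    fix n show "F n = shift k F' n" by (cases "k \<le> n") (simp_all add: shift_def F'_def Flow)
  qed
  have F'J: "F' \<in> J"
  proof -
    have "st (series_cnj F) F = shift k (shift k (st (series_cnj F') F'))"
      unfolding Fsh shift_cnj using F's by (simp add: star_shift1 star_shift2 cl)
    then have "\<omega> (st (series_cnj F) F) = fps_X ^ k * (fps_X ^ k * \<omega> (st (series_cnj F') F'))"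
      using F'c by (simp add: omega_shift cl)
    then have "\<omega> (st (series_cnj F') F') = 0" using F0 by simp
    then show ?thesis using F'c by (simp add: J_iff)
  qed
  have F'0: "F' 0 = F k" by (simp add: F'_def)
  obtain U \<phi> where c: "(U, \<phi>) \<in> A" "p \<in> U" using atlas_cover[OF atlas] by blast
  note ch = atlas_chart[OF atlas c(1)]
  have hom: "\<forall>x\<in>U. inv_into U \<phi> (\<phi> x) = x" "continuous_on U \<phi>"
    using ch(3) unfolding homeomorphism_def by auto
  define c0 where "c0 = \<phi> p"
  have c0U: "c0 \<in> \<phi> ` U" using c(2) by (simp add: c0_def)
  define fk where "fk = F k \<circ> inv_into U \<phi>"
  have smfk: "sm (\<phi> ` U) fk"
    using Fc c(1) unfolding fk_def cs_iff smooth_fun_sm by blast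
  have "continuous (at c0) fk"
    using differentiable_imp_continuous_within[OF sm_diffble[OF smfk c0U]] by simp
  moreover have "fk c0 \<noteq> 0" using p hom(1) c(2) by (simp add: fk_def c0_def)
  ultimately obtain e1 where e1: "e1 > 0" "\<And>y. dist c0 y < e1 \<Longrightarrow> fk y \<noteq> 0"
    using continuous_at_avoid by blast
  obtain e2 where e2: "e2 > 0" "ball c0 e2 \<subseteq> \<phi> ` U"
    using ch(2) c0U open_contains_ball by blast
  define R where "R = min e1 e2"
  define B where "B = ball c0 R"
  have R: "R > 0" using e1 e2 by (simp add: R_def)
  have BU: "B \<subseteq> \<phi> ` U" using e2 by (auto simp: B_def R_def)
  have Bnz: "fk y \<noteq> 0" if "y \<in> B" for y using that e1 by (auto simp: B_def R_def)
  have oB: "open B" by (simp add: B_def)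
  define r where "r = R / 6"
  have r: "r > 0" using R by (simp add: r_def)
  have cballB: "cball c0 (m * r) \<subseteq> B" if "m \<le> 5" for m :: real
  proof
    fix z assume "z \<in> cball c0 (m * r)"
    then have "dist c0 z \<le> m * r" by simp
    also have "\<dots> \<le> 5 * r" using that r by simp
    also have "\<dots> < R" using R by (simp add: r_def)
    finally show "z \<in> B" by (simp add: B_def)
  qed
  define th_e where "th_e = cutoff c0 (2 * r) (3 * r)"
  define th2_e where "th2_e = cutoff c0 (4 * r) (5 * r)"
  define bp_e where "bp_e = bump c0 r"
  define g_e where "g_e = (\<lambda>z. th2_e z * inverse (fk z))"
  have sm_th: "sm B th_e" unfolding th_e_def by (rule sm_subset[OF _ sm_cutoff]) (use r in auto)
  have sm_th2: "sm B th2_e" unfolding th2_e_def by (rule sm_subset[OF _ sm_cutoff]) (use r in auto)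
  have sm_bp: "sm B bp_e" unfolding bp_e_def by (rule sm_subset[OF _ sm_bump]) auto
  have sm_inv: "sm B (\<lambda>z. inverse (fk z))"
  proof (rule sm_compose[OF oB _ _ sm_inverse])
    show "open (- {0::complex})" by auto
    show "fk ` B \<subseteq> - {0}" using Bnz by auto
    show "sm B fk" by (rule sm_subset[OF BU smfk])
  qed
  have sm_g: "sm B g_e" unfolding g_e_def by (rule sm_mult[OF oB sm_th2 sm_inv])
  have out: "dist z c0 \<ge> \<rho>" if "z \<notin> cball c0 \<rho>" for z \<rho> using that by (simp add: dist_commute)
  have th_out: "th_e z = 0" if "z \<notin> cball c0 (3 * r)" for z
    unfolding th_e_def using r out[OF that] by (intro cutoff_zero) auto
  have g_out: "g_e z = 0" if "z \<notin> cball c0 (5 * r)" for z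
    unfolding g_e_def th2_e_def using r out[OF that] by (subst cutoff_zero) auto
  have bp_out: "bp_e z = 0" if "z \<notin> cball c0 r" for z
    unfolding bp_e_def using r out[OF that] by (intro bump_outside) auto
  note PBth = pullback[OF atlas c(1) oB BU cballB[of 3] sm_th th_out]
  note PBg = pullback[OF atlas c(1) oB BU cballB[of 5] sm_g g_out]
  note PBbp = pullback[OF atlas c(1) oB BU cballB[of 1, simplified] sm_bp bp_out]
  define th where "th = (\<lambda>y. if y \<in> U then th_e (\<phi> y) else 0)"
  define cc where "cc = (\<lambda>y. if y \<in> U then g_e (\<phi> y) else 0)"
  define bp where "bp = (\<lambda>y. if y \<in> U then bp_e (\<phi> y) else 0)"
  define K3 where "K3 = inv_into U \<phi> ` cball c0 (3 * r)"
  define K1 where "K1 = inv_into U \<phi> ` cball c0 r"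
  have sf_th: "sf th" using PBth(1) by (simp add: th_def)
  have sf_cc: "sf cc" using PBg(1) by (simp add: cc_def)
  have sf_bp: "sf bp" using PBbp(1) by (simp add: bp_def)
  have supp_th: "supp th \<subseteq> K3" using PBth(2) by (simp add: th_def K3_def)
  have supp_bp: "supp bp \<subseteq> K1" using PBbp(2) by (simp add: bp_def K1_def)
  have clK3: "closed K3" using PBth(3) by (simp add: K3_def compact_imp_closed)
  have inK: "y \<in> U \<and> \<phi> y = z" if "y = inv_into U \<phi> z" "z \<in> \<phi> ` U" for y z
    using that by (simp add: inv_into_into f_inv_into_f)
  have K3prop: "y \<in> U \<and> dist c0 (\<phi> y) \<le> 3 * r" if yK: "y \<in> K3" for y
  proof -
    obtain z where z: "z \<in> cball c0 (3 * r)" "y = inv_into U \<phi> z" using yK by (auto simp: K3_def)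
    have "z \<in> \<phi> ` U" using z(1) cballB[of 3] BU by auto
    then show ?thesis using inK[OF z(2)] z(1) by auto
  qed
  have K1prop: "y \<in> U \<and> dist c0 (\<phi> y) \<le> r" if yK: "y \<in> K1" for y
  proof -
    obtain z where z: "z \<in> cball c0 r" "y = inv_into U \<phi> z" using yK by (auto simp: K1_def)
    have "z \<in> \<phi> ` U" using z(1) cballB[of 1] BU by auto
    then show ?thesis using inK[OF z(2)] z(1) by auto
  qed
  have inv1: "cc y * F' 0 y = 1" if "y \<in> K3" for y
  proof -
    have y: "y \<in> U" "dist c0 (\<phi> y) \<le> 3 * r" using K3prop[OF that] by auto
    have "\<phi> y \<in> B" using cballB[of 3] y(2) by auto
    then have nz: "F k y \<noteq> 0" using Bnz[of "\<phi> y"] hom(1) y(1) by (simp add: fk_def)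
    have "th2_e (\<phi> y) = 1" unfolding th2_e_def using r y(2) by (intro cutoff_one) (auto simp: dist_commute)
    then have "cc y = inverse (F k y)" using y(1) hom(1) by (simp add: cc_def g_e_def fk_def)
    then show ?thesis using nz by (simp add: F'0)
  qed
  have thK: "th x = 0" if "x \<notin> K3" for x using supp_th that supp_out by blast
  note REC = recursion[OF sf_cc sf_th F's clK3 thK inv1]
  define e where "e = einv Mr cc th F'"
  have es: "e \<in> ss" and eF: "st e F' = ser0 th" using REC by (simp_all add: e_def)
  define O2 where "O2 = U \<inter> \<phi> -` ball c0 (2 * r)"
  have oO2: "open O2" unfolding O2_def by (rule open_preimage[OF ch(1) hom(2) open_ball])
  have th1: "th x = 1" if "x \<in> O2" for x
    using that r unfolding O2_def th_def th_e_def by (auto intro!: cutoff_one simp: dist_commute)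
  have K1O2: "K1 \<subseteq> O2"
  proof
    fix y assume "y \<in> K1"
    then have "y \<in> U" "dist c0 (\<phi> y) \<le> r" using K1prop by auto
    then show "y \<in> O2" using r by (auto simp: O2_def)
  qed
  have uJ: "u \<in> J" if u: "u \<in> cs" "\<And>n. supp (u n) \<subseteq> K1" for u
  proof -
    have us: "u \<in> ss" using u(1) by (rule cs_ss)
    have "u = st u (ser0 th)" using absorb[OF sf_th oO2 th1 K1O2 us u(2)] by simp
    also have "\<dots> = st u (st e F')" by (simp add: eF)
    also have "\<dots> = st (st u e) F'" using us es F's by (simp add: assoc)
    finally have "u = st (st u e) F'" .
    moreover have "st (st u e) F' \<in> J" by (rule J_ideal[OF star_ss[OF us es] F'J])
    ultimately show ?thesis by simp
  qed
  have "bp p \<noteq> 0" using c(2) bump_center[OF r] by (simp add: bp_def bp_e_def c0_def)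
  moreover have "st (ser0 bp) G \<in> J" if G: "G \<in> cs" for G
  proof (rule uJ)
    show "st (ser0 bp) G \<in> cs" by (rule star_cs_right[OF ser0_ss[OF sf_bp] G])
    fix n
    have "supp (st (ser0 bp) G n) \<subseteq> (\<Union>s\<le>n. supp (ser0 bp s))"
      by (rule supp_star_left[OF ser0_ss[OF sf_bp] cs_ss[OF G]])
    also have "\<dots> \<subseteq> K1"
    proof (intro UN_least)
      fix s show "supp (ser0 bp s) \<subseteq> K1" using supp_bp by (cases "s = 0") (simp_all add: ser0_def supp_zero)
    qed
    finally show "supp (st (ser0 bp) G n) \<subseteq> K1" .
  qed
  ultimately show ?thesis using sf_bp by blast
qed

lemma faithful_if_inj:
  assumes inj: "inj_on (gns_rep A Mr \<omega>) ss"
  shows "faithful_functional A Mr \<omega>"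
proof (rule ccontr)
  assume nf: "\<not> faithful_functional A Mr \<omega>"
  have "J \<noteq> {(\<lambda>n x. 0)}" using nf by (simp add: faithful_functional_def)
  then obtain F where FJ: "F \<in> J" and Fnz: "F \<noteq> (\<lambda>n x. 0)" using zero_J by blast
  obtain bp p where bp: "sf bp" "bp p \<noteq> 0" and kill: "\<And>G. G \<in> cs \<Longrightarrow> st (ser0 bp) G \<in> J"
    using key_nonfaithful[OF FJ Fnz] by blast
  define Z :: "'m fseries" where "Z = (\<lambda>n x. 0)"
  have Ys: "ser0 bp \<in> ss" by (rule ser0_ss[OF bp(1)])
  have Zs: "Z \<in> ss" using zero_cs cs_ss by (simp add: Z_def)
  have YZ: "ser0 bp \<noteq> Z" using bp(2) by (auto simp: ser0_def Z_def fun_eq_iff)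
  have "gns_rep A Mr \<omega> (ser0 bp) = gns_rep A Mr \<omega> Z"
  proof (rule ext)
    fix \<psi>
    show "gns_rep A Mr \<omega> (ser0 bp) \<psi> = gns_rep A Mr \<omega> Z \<psi>"
    proof (cases "\<psi> \<in> gns_space A Mr \<omega>")
      case True
      then obtain G0 where "G0 \<in> cs" "\<psi> = gns_vec A Mr \<omega> G0" by (auto simp: gns_space_def)
      then have "\<exists>G. G \<in> cs \<and> \<psi> = gns_vec A Mr \<omega> G" by blast
      then have sG: "(SOME G. G \<in> cs \<and> \<psi> = gns_vec A Mr \<omega> G) \<in> cs" by (rule someI2_ex) blast
      define G where "G = (SOME G. G \<in> cs \<and> \<psi> = gns_vec A Mr \<omega> G)"
      have Gc: "G \<in> cs" using sG by (simp add: G_def)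
      have "st Z G = Z"
        using Gc Mr_zero1 by (simp add: star_apply Z_def cs_iff fun_eq_iff)
      then have "gns_vec A Mr \<omega> (st Z G) = J" using vec_J[OF zero_J] by (simp add: Z_def)
      moreover have "gns_vec A Mr \<omega> (st (ser0 bp) G) = J" by (rule vec_J[OF kill[OF Gc]])
      ultimately show ?thesis using True by (simp add: gns_rep_def G_def[symmetric])
    next
      case False
      then show ?thesis by (simp add: gns_rep_def)
    qed
  qed
  then show False using inj Ys Zs YZ by (meson inj_onD)
qed

end

theorem proposition7:
  fixes A :: "('m::{t2_space, second_countable_topology} set \<times> ('m \<Rightarrow> 'e::euclidean_space)) set"
    and pb :: "('m \<Rightarrow> complex) \<Rightarrow> ('m \<Rightarrow> complex) \<Rightarrow> ('m \<Rightarrow> complex)"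
    and Mr :: "nat \<Rightarrow> ('m \<Rightarrow> complex) \<Rightarrow> ('m \<Rightarrow> complex) \<Rightarrow> ('m \<Rightarrow> complex)"
    and \<omega> :: "'m fseries \<Rightarrow> complex fps"
  assumes "smooth_atlas A"
    and "poisson_bracket A pb"
    and "local_star_product A pb Mr"
    and "positive_functional A Mr \<omega>"
  shows "inj_on (gns_rep A Mr \<omega>) (smooth_series A) \<longleftrightarrow> faithful_functional A Mr \<omega>"
proof -
  interpret sp A pb Mr \<omega> using assms(1,3,4) by unfold_locales
  show ?thesis using faithful_if_inj inj_if_faithful by blast
qed


end
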